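(* Let $v$ and $\tilde v$ be quadratic vector fields on $\mathbb{C}^2$, each having exactly four singular points in $\mathbb{C}^2$, all of them non-degenerate. If $v$ and $\tilde v$ have the same spectra of singularities, then there is an affine map $T$ of $\mathbb{C}^2$ such that the transform $T_*\tilde v$ either equals $v$ or is a twin vector field of $v$. Moreover, there is a nonempty Zariski-open subset $U$ of the space $\mathcal{A}_2$ of quadratic vector fields such that every $v\in U$ has exactly one twin vector field.
   Context: A quadratic vector field on $\mathbb{C}^2$ is $v=P\,\partial_x+Q\,\partial_y$ with $P,Q\in\mathbb{C}[x,y]$ of degree at most $2$; $\mathcal{A}_2$ denotes the (12-dimensional) vector space of these. A singular point is a common zero $p$ of $P,Q$. It is non-degenerate if $\det Dv(p)\neq 0$, where $Dv(p)=\begin{pmatrix}P_x&P_y\\Q_x&Q_y\end{pmatrix}(p)$. The spectrum of $v$ at $p$ is the ordered pair $(\operatorname{tr}Dv(p),\det Dv(p))$. Two such vector fields have the same spectra of singularities if the multisets $\{(\operatorname{tr}Dv(p),\det Dv(p)) : p\in \mathrm{Sing}(v)\}$ coincide, where positions of the singular points are not taken into account. For an affine map $T$ of $\mathbb{C}^2$, $T_*v(x,y)=DT\cdot v(T^{-1}(x,y))$. Two vector fields are affine equivalent if one is $T_*$ of the other for some affine $T$. Two vector fields $v_1,v_2$ with isolated singularities are twin vector fields if $v_1\neq v_2$, they have exactly the same singular set, and for each common singular point $p$ the matrices $Dv_1(p)$ and $Dv_2(p)$ have the same trace and determinant. *)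

theory Defs
  imports "HOL-Analysis.Analysis" "HOL-Library.Multiset"
begin

text \<open>The space A_2 of quadratic vector fields v = P d/dx + Q d/dy on C^2 is identified
with C^12 via the coefficients:
  P(x,y) = v0 + v1 x + v2 y + v3 x^2 + v4 x y + v5 y^2,
  Q(x,y) = v6 + v7 x + v8 y + v9 x^2 + v10 x y + v11 y^2.\<close>

type_synonym qvf = "complex ^ 12"

definition Pv :: "qvf \<Rightarrow> complex \<Rightarrow> complex \<Rightarrow> complex" where
  "Pv v x y = v$0 + v$1 * x + v$2 * y + v$3 * x^2 + v$4 * x * y + v$5 * y^2"

definition Qv :: "qvf \<Rightarrow> complex \<Rightarrow> complex \<Rightarrow> complex" where
  "Qv v x y = v$6 + v$7 * x + v$8 * y + v$9 * x^2 + v$10 * x * y + v$11 * y^2"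

definition vf :: "qvf \<Rightarrow> complex \<times> complex \<Rightarrow> complex \<times> complex" where
  "vf v z = (Pv v (fst z) (snd z), Qv v (fst z) (snd z))"

definition Px :: "qvf \<Rightarrow> complex \<Rightarrow> complex \<Rightarrow> complex" where
  "Px v x y = v$1 + 2 * v$3 * x + v$4 * y"
definition Py :: "qvf \<Rightarrow> complex \<Rightarrow> complex \<Rightarrow> complex" where
  "Py v x y = v$2 + v$4 * x + 2 * v$5 * y"
definition Qx :: "qvf \<Rightarrow> complex \<Rightarrow> complex \<Rightarrow> complex" where
  "Qx v x y = v$7 + 2 * v$9 * x + v$10 * y"
definition Qy :: "qvf \<Rightarrow> complex \<Rightarrow> complex \<Rightarrow> complex" where
  "Qy v x y = v$8 + v$10 * x + 2 * v$11 * y"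

definition trD :: "qvf \<Rightarrow> complex \<times> complex \<Rightarrow> complex" where
  "trD v p = Px v (fst p) (snd p) + Qy v (fst p) (snd p)"

definition detD :: "qvf \<Rightarrow> complex \<times> complex \<Rightarrow> complex" where
  "detD v p = Px v (fst p) (snd p) * Qy v (fst p) (snd p) - Py v (fst p) (snd p) * Qx v (fst p) (snd p)"

definition Sing :: "qvf \<Rightarrow> (complex \<times> complex) set" where
  "Sing v = {p. Pv v (fst p) (snd p) = 0 \<and> Qv v (fst p) (snd p) = 0}"

definition nondegenerate_sing :: "qvf \<Rightarrow> complex \<times> complex \<Rightarrow> bool" where
  "nondegenerate_sing v p \<longleftrightarrow> p \<in> Sing v \<and> detD v p \<noteq> 0"

definition spectra :: "qvf \<Rightarrow> (complex \<times> complex) multiset" where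
  "spectra v = image_mset (\<lambda>p. (trD v p, detD v p)) (mset_set (Sing v))"

definition isolated_sings :: "qvf \<Rightarrow> bool" where
  "isolated_sings v \<longleftrightarrow> (\<forall>p\<in>Sing v. \<not> p islimpt Sing v)"

definition twin :: "qvf \<Rightarrow> qvf \<Rightarrow> bool" where
  "twin v1 v2 \<longleftrightarrow> isolated_sings v1 \<and> isolated_sings v2 \<and> v1 \<noteq> v2 \<and>
     Sing v1 = Sing v2 \<and>
     (\<forall>p\<in>Sing v1. trD v1 p = trD v2 p \<and> detD v1 p = detD v2 p)"

definition lin2 :: "complex \<Rightarrow> complex \<Rightarrow> complex \<Rightarrow> complex \<Rightarrow> complex \<times> complex \<Rightarrow> complex \<times> complex" where
  "lin2 a b c d z = (a * fst z + b * snd z, c * fst z + d * snd z)"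

definition aff2 :: "complex \<Rightarrow> complex \<Rightarrow> complex \<Rightarrow> complex \<Rightarrow> complex \<Rightarrow> complex \<Rightarrow> complex \<times> complex \<Rightarrow> complex \<times> complex" where
  "aff2 a b c d e f z = (a * fst z + b * snd z + e, c * fst z + d * snd z + f)"

definition pushfwd :: "complex \<Rightarrow> complex \<Rightarrow> complex \<Rightarrow> complex \<Rightarrow> complex \<Rightarrow> complex \<Rightarrow> qvf \<Rightarrow> complex \<times> complex \<Rightarrow> complex \<times> complex" where
  "pushfwd a b c d e f v z = lin2 a b c d (vf v (inv (aff2 a b c d e f) z))"

inductive_set poly_fun :: "(qvf \<Rightarrow> complex) set" where
  pf_const: "(\<lambda>_. c) \<in> poly_fun"
| pf_coord: "(\<lambda>v. v $ i) \<in> poly_fun"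
| pf_add: "f \<in> poly_fun \<Longrightarrow> g \<in> poly_fun \<Longrightarrow> (\<lambda>v. f v + g v) \<in> poly_fun"
| pf_mult: "f \<in> poly_fun \<Longrightarrow> g \<in> poly_fun \<Longrightarrow> (\<lambda>v. f v * g v) \<in> poly_fun"

definition zariski_open :: "qvf set \<Rightarrow> bool" where
  "zariski_open U \<longleftrightarrow> (\<exists>F \<subseteq> poly_fun. U = - {v. \<forall>f\<in>F. f v = 0})"

end

theory Submission
  imports Defs "HOL-Computational_Algebra.Fundamental_Theorem_Algebra"
begin

type_synonym pt = "complex \<times> complex"

definition Dl :: "pt \<Rightarrow> pt \<Rightarrow> pt \<Rightarrow> complex" where
  "Dl p q r = (fst q - fst p) * (snd r - snd p) - (snd q - snd p) * (fst r - fst p)"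

definition qe :: "(nat \<Rightarrow> complex) \<Rightarrow> pt \<Rightarrow> complex" where
  "qe c z = c 0 + c 1 * fst z + c 2 * snd z + c 3 * (fst z)^2 + c 4 * fst z * snd z + c 5 * (snd z)^2"
definition qdx :: "(nat \<Rightarrow> complex) \<Rightarrow> pt \<Rightarrow> complex" where
  "qdx c z = c 1 + 2 * c 3 * fst z + c 4 * snd z"
definition qdy :: "(nat \<Rightarrow> complex) \<Rightarrow> pt \<Rightarrow> complex" where
  "qdy c z = c 2 + c 4 * fst z + 2 * c 5 * snd z"

definition lev :: "(nat \<Rightarrow> complex) \<Rightarrow> pt \<Rightarrow> complex" where
  "lev a z = a 0 + a 1 * fst z + a 2 * snd z"

definition lf :: "pt \<Rightarrow> pt \<Rightarrow> nat \<Rightarrow> complex" where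
  "lf p q k = (if k = 0 then (snd q - snd p) * fst p - (fst q - fst p) * snd p
     else if k = 1 then - (snd q - snd p) else fst q - fst p)"

definition pm :: "(nat \<Rightarrow> complex) \<Rightarrow> (nat \<Rightarrow> complex) \<Rightarrow> nat \<Rightarrow> complex" where
  "pm a b k = (if k = 0 then a 0 * b 0 else if k = 1 then a 0 * b 1 + a 1 * b 0
     else if k = 2 then a 0 * b 2 + a 2 * b 0 else if k = 3 then a 1 * b 1
     else if k = 4 then a 1 * b 2 + a 2 * b 1 else a 2 * b 2)"

lemma all6: "(\<forall>k<(6::nat). P k) \<longleftrightarrow> P 0 \<and> P 1 \<and> P 2 \<and> P 3 \<and> P 4 \<and> P 5"
  apply (rule iffI) apply simp
  apply (clarify) subgoal for k by (cases k; cases "k - 1"; cases "k-2"; cases "k-3"; cases "k-4"; cases "k-5"; simp add: numeral_eq_Suc)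
  done

lemma lev_lf: "lev (lf p q) z = Dl p q z"
  unfolding lev_def lf_def Dl_def by (simp add: algebra_simps)

lemma qe_pm: "qe (pm a b) z = lev a z * lev b z"
  unfolding qe_def pm_def lev_def by (simp add: algebra_simps power2_eq_square)

lemma qe_zero_coeffs:
  assumes "\<And>z. qe c z = 0"
  shows "c 0 = 0 \<and> c 1 = 0 \<and> c 2 = 0 \<and> c 3 = 0 \<and> c 4 = 0 \<and> c 5 = 0"
proof -
  have a: "c 0 = 0" using assms[of "(0,0)"] by (simp add: qe_def)
  have b1: "c 1 + c 3 = 0" using assms[of "(1,0)"] a by (simp add: qe_def)
  have b2: "- c 1 + c 3 = 0" using assms[of "(-1,0)"] a by (simp add: qe_def)
  have c1: "c 2 + c 5 = 0" using assms[of "(0,1)"] a by (simp add: qe_def)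
  have c2: "- c 2 + c 5 = 0" using assms[of "(0,-1)"] a by (simp add: qe_def)
  have d: "c 1 + c 2 + c 3 + c 4 + c 5 = 0" using assms[of "(1,1)"] a by (simp add: qe_def)
  have e1: "c 1 = ((c 1 + c 3) - (- c 1 + c 3)) / 2" "c 3 = ((c 1 + c 3) + (- c 1 + c 3)) / 2"
    "c 2 = ((c 2 + c 5) - (- c 2 + c 5)) / 2" "c 5 = ((c 2 + c 5) + (- c 2 + c 5)) / 2" by (simp_all add: field_simps)
  then have "c 1 = 0" "c 3 = 0" "c 2 = 0" "c 5 = 0" using b1 b2 c1 c2 by simp_all
  then show ?thesis using a d by simp
qed

definition qcomp :: "(nat \<Rightarrow> complex) \<Rightarrow> complex \<Rightarrow> complex \<Rightarrow> complex \<Rightarrow> complex \<Rightarrow> complex \<Rightarrow> complex \<Rightarrow> nat \<Rightarrow> complex" where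
  "qcomp c al be ga de ep ph k =
    (if k = 0 then c 0 + c 1 * ep + c 2 * ph + c 3 * ep^2 + c 4 * ep * ph + c 5 * ph^2
     else if k = 1 then c 1 * al + c 2 * ga + 2 * c 3 * al * ep + c 4 * (al * ph + ga * ep) + 2 * c 5 * ga * ph
     else if k = 2 then c 1 * be + c 2 * de + 2 * c 3 * be * ep + c 4 * (be * ph + de * ep) + 2 * c 5 * de * ph
     else if k = 3 then c 3 * al^2 + c 4 * al * ga + c 5 * ga^2
     else if k = 4 then 2 * c 3 * al * be + c 4 * (al * de + be * ga) + 2 * c 5 * ga * de
     else c 3 * be^2 + c 4 * be * de + c 5 * de^2)"

lemma qe_qcomp: "qe c (al * x + be * y + ep, ga * x + de * y + ph) = qe (qcomp c al be ga de ep ph) (x, y)"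
  unfolding qe_def qcomp_def by (simp add: algebra_simps power2_eq_square)

lemma qdx_qcomp: "qdx (qcomp c al be ga de ep ph) (x, y) =
   al * qdx c (al * x + be * y + ep, ga * x + de * y + ph) + ga * qdy c (al * x + be * y + ep, ga * x + de * y + ph)"
  unfolding qdx_def qdy_def qcomp_def by (simp add: algebra_simps power2_eq_square)

lemma qdy_qcomp: "qdy (qcomp c al be ga de ep ph) (x, y) =
   be * qdx c (al * x + be * y + ep, ga * x + de * y + ph) + de * qdy c (al * x + be * y + ep, ga * x + de * y + ph)"
  unfolding qdx_def qdy_def qcomp_def by (simp add: algebra_simps power2_eq_square)

lemma affine_coords:
  assumes E: "Dl p1 p2 p3 \<noteq> 0"
  shows "(fst p2 - fst p1) * (Dl p1 z p3 / Dl p1 p2 p3) + (fst p3 - fst p1) * (Dl p1 p2 z / Dl p1 p2 p3) + fst p1 = fst z \<and>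
         (snd p2 - snd p1) * (Dl p1 z p3 / Dl p1 p2 p3) + (snd p3 - snd p1) * (Dl p1 p2 z / Dl p1 p2 p3) + snd p1 = snd z"
proof -
  have i1: "(fst p2 - fst p1) * Dl p1 z p3 + (fst p3 - fst p1) * Dl p1 p2 z = Dl p1 p2 p3 * (fst z - fst p1)"
    and i2: "(snd p2 - snd p1) * Dl p1 z p3 + (snd p3 - snd p1) * Dl p1 p2 z = Dl p1 p2 p3 * (snd z - snd p1)"
    unfolding Dl_def by (simp_all add: algebra_simps)
  have "(fst p2 - fst p1) * (Dl p1 z p3 / Dl p1 p2 p3) + (fst p3 - fst p1) * (Dl p1 p2 z / Dl p1 p2 p3)
      = ((fst p2 - fst p1) * Dl p1 z p3 + (fst p3 - fst p1) * Dl p1 p2 z) / Dl p1 p2 p3"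
    using E by (simp add: field_simps)
  moreover have "(snd p2 - snd p1) * (Dl p1 z p3 / Dl p1 p2 p3) + (snd p3 - snd p1) * (Dl p1 p2 z / Dl p1 p2 p3)
      = ((snd p2 - snd p1) * Dl p1 z p3 + (snd p3 - snd p1) * Dl p1 p2 z) / Dl p1 p2 p3"
    using E by (simp add: field_simps)
  ultimately show ?thesis using i1 i2 E by simp
qed

lemma lin2: "x + y = 0 \<Longrightarrow> 2 * x + 4 * y = 0 \<Longrightarrow> x = 0 \<and> y = (0::complex)"
proof -
  assume a: "x + y = 0" "2 * x + 4 * y = 0"
  have "x = 2 * (x + y) - (2 * x + 4 * y) / 2" "y = (2 * x + 4 * y) / 2 - (x + y)" by (simp_all add: field_simps)
  then show ?thesis using a by simp
qed

lemma vanish_all: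
  assumes E: "Dl p1 p2 p3 \<noteq> 0" and B: "Dl p1 p3 p4 \<noteq> 0" and C: "Dl p1 p2 p4 \<noteq> 0"
    and h1: "qe H p1 = 0" and h2: "qe H p2 = 0" and h3: "qe H p3 = 0"
    and h4: "qe H (2 * fst p2 - fst p1, 2 * snd p2 - snd p1) = 0"
    and h5: "qe H (2 * fst p3 - fst p1, 2 * snd p3 - snd p1) = 0" and h6: "qe H p4 = 0"
  shows "qe H z = 0"
proof -
  define e1 e2 f1 f2 where "e1 = fst p2 - fst p1" "e2 = snd p2 - snd p1" "f1 = fst p3 - fst p1" "f2 = snd p3 - snd p1"
  define h where "h = qcomp H e1 f1 e2 f2 (fst p1) (snd p1)"
  have S: "\<And>s t. qe H (e1 * s + f1 * t + fst p1, e2 * s + f2 * t + snd p1) = qe h (s,t)"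
    unfolding h_def by (rule qe_qcomp)
  have g: "\<And>s t w. (e1 * s + f1 * t + fst p1, e2 * s + f2 * t + snd p1) = w \<Longrightarrow> qe H w = qe h (s,t)"
    using S by blast
  have v1: "qe h (0,0) = 0" using g[of 0 0 p1] h1 by simp
  have v2: "qe h (1,0) = 0" using g[of 1 0 p2] h2 by (simp add: e1_e2_f1_f2_def)
  have v3: "qe h (0,1) = 0" using g[of 0 1 p3] h3 by (simp add: e1_e2_f1_f2_def)
  have v4: "qe h (2,0) = 0" using g[of 2 0 "(2 * fst p2 - fst p1, 2 * snd p2 - snd p1)"] h4 by (simp add: e1_e2_f1_f2_def)
  have v5: "qe h (0,2) = 0" using g[of 0 2 "(2 * fst p3 - fst p1, 2 * snd p3 - snd p1)"] h5 by (simp add: e1_e2_f1_f2_def)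
  define s4 t4 where "s4 = Dl p1 p4 p3 / Dl p1 p2 p3" "t4 = Dl p1 p2 p4 / Dl p1 p2 p3"
  have v6: "qe h (s4,t4) = 0" using g[of s4 t4 p4] h6 affine_coords[OF E, of p4]
    unfolding s4_t4_def e1_e2_f1_f2_def by (simp add: prod_eq_iff)
  have s4: "s4 \<noteq> 0" using B E unfolding s4_t4_def by (simp add: Dl_def algebra_simps)
  have t4: "t4 \<noteq> 0" using C E unfolding s4_t4_def by simp
  have z0: "h 0 = 0" using v1 by (simp add: qe_def)
  have a1: "h 1 + h 3 = 0" "2 * h 1 + 4 * h 3 = 0" using v2 v4 z0 by (simp_all add: qe_def mult.commute)
  have a2: "h 2 + h 5 = 0" "2 * h 2 + 4 * h 5 = 0" using v3 v5 z0 by (simp_all add: qe_def mult.commute)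
  have z1: "h 1 = 0" "h 3 = 0" "h 2 = 0" "h 5 = 0" using lin2[OF a1] lin2[OF a2] by auto
  have "h 4 * s4 * t4 = 0" using v6 z0 z1 by (simp add: qe_def)
  then have z4: "h 4 = 0" using s4 t4 by simp
  have "qe H z = qe h (Dl p1 z p3 / Dl p1 p2 p3, Dl p1 p2 z / Dl p1 p2 p3)"
    using g affine_coords[OF E, of z] unfolding e1_e2_f1_f2_def by (simp add: prod_eq_iff)
  also have "\<dots> = 0" using z0 z1 z4 by (simp add: qe_def)
  finally show ?thesis .
qed

definition C1 :: "pt \<Rightarrow> pt \<Rightarrow> pt \<Rightarrow> pt \<Rightarrow> nat \<Rightarrow> complex" where
  "C1 p1 p2 p3 p4 = pm (lf p1 p2) (lf p3 p4)"
definition C2 :: "pt \<Rightarrow> pt \<Rightarrow> pt \<Rightarrow> pt \<Rightarrow> nat \<Rightarrow> complex" where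
  "C2 p1 p2 p3 p4 = pm (lf p1 p3) (lf p2 p4)"

lemma qe_C1: "qe (C1 p1 p2 p3 p4) z = Dl p1 p2 z * Dl p3 p4 z"
  unfolding C1_def qe_pm lev_lf ..
lemma qe_C2: "qe (C2 p1 p2 p3 p4) z = Dl p1 p3 z * Dl p2 p4 z"
  unfolding C2_def qe_pm lev_lf ..

lemma qe_lin: "qe (\<lambda>k. c k - a * d k - b * e k) z = qe c z - a * qe d z - b * qe e z"
  unfolding qe_def by (simp add: algebra_simps)

definition gp :: "pt \<Rightarrow> pt \<Rightarrow> pt \<Rightarrow> pt \<Rightarrow> bool" where
  "gp p1 p2 p3 p4 \<longleftrightarrow> Dl p1 p2 p3 \<noteq> 0 \<and> Dl p1 p2 p4 \<noteq> 0 \<and> Dl p1 p3 p4 \<noteq> 0 \<and> Dl p2 p3 p4 \<noteq> 0"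

lemma Dl_self: "Dl p q p = 0" "Dl p q q = 0"
  unfolding Dl_def by (simp_all add: algebra_simps)

lemma pencil:
  assumes g: "gp p1 p2 p3 p4" and c: "qe c p1 = 0" "qe c p2 = 0" "qe c p3 = 0" "qe c p4 = 0"
  shows "\<exists>a b. \<forall>k<6. c k = a * C1 p1 p2 p3 p4 k + b * C2 p1 p2 p3 p4 k"
proof -
  define q where "q = (2 * fst p3 - fst p1, 2 * snd p3 - snd p1)"
  define r where "r = (2 * fst p2 - fst p1, 2 * snd p2 - snd p1)"
  have iq: "Dl p1 p2 q = 2 * Dl p1 p2 p3" "Dl p3 p4 q = - Dl p1 p3 p4" "Dl p1 p3 q = 0"
    unfolding q_def Dl_def by (simp_all add: algebra_simps)
  have ir: "Dl p1 p3 r = - 2 * Dl p1 p2 p3" "Dl p2 p4 r = - Dl p1 p2 p4" "Dl p1 p2 r = 0"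
    unfolding r_def Dl_def by (simp_all add: algebra_simps)
  have C1q: "qe (C1 p1 p2 p3 p4) q \<noteq> 0" using g unfolding qe_C1 iq gp_def by simp
  have C2q: "qe (C2 p1 p2 p3 p4) q = 0" unfolding qe_C2 iq by simp
  have C2r: "qe (C2 p1 p2 p3 p4) r \<noteq> 0" using g unfolding qe_C2 ir gp_def by simp
  have C1r: "qe (C1 p1 p2 p3 p4) r = 0" unfolding qe_C1 ir by simp
  define a where "a = qe c q / qe (C1 p1 p2 p3 p4) q"
  define b where "b = qe c r / qe (C2 p1 p2 p3 p4) r"
  define H where "H = (\<lambda>k. c k - a * C1 p1 p2 p3 p4 k - b * C2 p1 p2 p3 p4 k)"
  have qH: "qe H z = qe c z - a * qe (C1 p1 p2 p3 p4) z - b * qe (C2 p1 p2 p3 p4) z" for z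
    unfolding H_def by (rule qe_lin)
  have gg: "Dl p1 p2 p3 \<noteq> 0" "Dl p1 p3 p4 \<noteq> 0" "Dl p1 p2 p4 \<noteq> 0" using g by (auto simp: gp_def)
  have d34: "Dl p3 p4 p3 = 0" "Dl p3 p4 p4 = 0" "Dl p2 p4 p2 = 0" "Dl p2 p4 p4 = 0" "Dl p1 p3 p1 = 0" "Dl p1 p3 p3 = 0"
    "Dl p1 p2 p1 = 0" "Dl p1 p2 p2 = 0" by (simp_all add: Dl_self)
  have "qe H z = 0" for z
  proof (rule vanish_all[OF gg])
    show "qe H p1 = 0" "qe H p2 = 0" "qe H p3 = 0" "qe H p4 = 0"
      unfolding qH qe_C1 qe_C2 using c d34 by simp_all
    show "qe H (2 * fst p2 - fst p1, 2 * snd p2 - snd p1) = 0"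
      unfolding r_def[symmetric] qH using C1r C2r unfolding b_def by simp
    show "qe H (2 * fst p3 - fst p1, 2 * snd p3 - snd p1) = 0"
      unfolding q_def[symmetric] qH using C1q C2q unfolding a_def by simp
  qed
  then have "H 0 = 0 \<and> H 1 = 0 \<and> H 2 = 0 \<and> H 3 = 0 \<and> H 4 = 0 \<and> H 5 = 0" by (rule qe_zero_coeffs)
  then have "\<forall>k<6. c k = a * C1 p1 p2 p3 p4 k + b * C2 p1 p2 p3 p4 k"
    unfolding all6 H_def by (simp add: algebra_simps)
  then show ?thesis by blast
qed

definition Jq :: "(nat \<Rightarrow> complex) \<Rightarrow> (nat \<Rightarrow> complex) \<Rightarrow> pt \<Rightarrow> complex" where
  "Jq c d z = qdx c z * qdy d z - qdy c z * qdx d z"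

lemma qdx_pm: "qdx (pm a b) z = a 1 * lev b z + b 1 * lev a z"
  unfolding qdx_def pm_def lev_def by (simp add: algebra_simps)
lemma qdy_pm: "qdy (pm a b) z = a 2 * lev b z + b 2 * lev a z"
  unfolding qdy_def pm_def lev_def by (simp add: algebra_simps)

lemma J_C_gen: "Jq (C1 p1 p2 p3 p4) (C2 p1 p2 p3 p4) z =
   (lf p1 p2 1 * Dl p3 p4 z + lf p3 p4 1 * Dl p1 p2 z) * (lf p1 p3 2 * Dl p2 p4 z + lf p2 p4 2 * Dl p1 p3 z)
 - (lf p1 p2 2 * Dl p3 p4 z + lf p3 p4 2 * Dl p1 p2 z) * (lf p1 p3 1 * Dl p2 p4 z + lf p2 p4 1 * Dl p1 p3 z)"
  unfolding Jq_def C1_def C2_def qdx_pm qdy_pm lev_lf ..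

lemma J_C:
  "Jq (C1 p1 p2 p3 p4) (C2 p1 p2 p3 p4) p1 = Dl p1 p3 p4 * Dl p1 p2 p4 * Dl p1 p2 p3"
  "Jq (C1 p1 p2 p3 p4) (C2 p1 p2 p3 p4) p2 = - Dl p2 p3 p4 * Dl p1 p2 p4 * Dl p1 p2 p3"
  "Jq (C1 p1 p2 p3 p4) (C2 p1 p2 p3 p4) p3 = Dl p2 p3 p4 * Dl p1 p3 p4 * Dl p1 p2 p3"
  "Jq (C1 p1 p2 p3 p4) (C2 p1 p2 p3 p4) p4 = - Dl p2 p3 p4 * Dl p1 p3 p4 * Dl p1 p2 p4"
  unfolding J_C_gen by (simp_all add: lf_def Dl_def algebra_simps)

lemma areas_sum:
  "Dl p2 p3 p4 - Dl p1 p3 p4 + Dl p1 p2 p4 - Dl p1 p2 p3 = 0"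
  "Dl p2 p3 p4 * fst p1 - Dl p1 p3 p4 * fst p2 + Dl p1 p2 p4 * fst p3 - Dl p1 p2 p3 * fst p4 = 0"
  "Dl p2 p3 p4 * snd p1 - Dl p1 p3 p4 * snd p2 + Dl p1 p2 p4 * snd p3 - Dl p1 p2 p3 * snd p4 = 0"
  unfolding Dl_def by (simp_all add: algebra_simps)

lemma collinear_param:
  assumes "p \<noteq> q" "Dl p q r = 0"
  shows "\<exists>t. r = (fst p + t * (fst q - fst p), snd p + t * (snd q - snd p))"
proof (cases "fst q = fst p")
  case True
  then have n: "snd q - snd p \<noteq> 0" using assms(1) by (simp add: prod_eq_iff)
  have "fst r = fst p" using assms(2) True n unfolding Dl_def by simp
  then show ?thesis using n True
    by (intro exI[of _ "(snd r - snd p) / (snd q - snd p)"]) (simp add: prod_eq_iff field_simps)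
next
  case False
  then have n: "fst q - fst p \<noteq> 0" by simp
  have "(snd q - snd p) * (fst r - fst p) = (fst q - fst p) * (snd r - snd p)" using assms(2) unfolding Dl_def by simp
  then have "snd r = snd p + (fst r - fst p) / (fst q - fst p) * (snd q - snd p)"
    using n by (simp add: field_simps)
  then show ?thesis using n
    by (intro exI[of _ "(fst r - fst p) / (fst q - fst p)"]) (simp add: prod_eq_iff field_simps)
qed

lemma line_vanish:
  assumes pq: "p \<noteq> q" and rp: "r \<noteq> p" and rq: "r \<noteq> q" and D: "Dl p q r = 0"
    and c: "qe c p = 0" "qe c q = 0" "qe c r = 0"
  shows "qe c (fst p + t * (fst q - fst p), snd p + t * (snd q - snd p)) = 0"
proof -
  obtain t0 where t0: "r = (fst p + t0 * (fst q - fst p), snd p + t0 * (snd q - snd p))"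
    using collinear_param[OF pq D] by blast
  have t00: "t0 \<noteq> 0" using rp t0 by (auto simp: prod_eq_iff)
  have t01: "t0 \<noteq> 1" using rq t0 by (auto simp: prod_eq_iff)
  define h where "h = qcomp c (fst q - fst p) 0 (snd q - snd p) 0 (fst p) (snd p)"
  have g: "qe c (fst p + s * (fst q - fst p), snd p + s * (snd q - snd p)) = h 0 + h 1 * s + h 3 * s^2" for s
  proof -
    have "qe c (fst p + s * (fst q - fst p), snd p + s * (snd q - snd p)) =
          qe c ((fst q - fst p) * s + 0 * 0 + fst p, (snd q - snd p) * s + 0 * 0 + snd p)"
      by (simp add: algebra_simps)
    also have "\<dots> = qe h (s, 0)" unfolding h_def by (rule qe_qcomp)
    finally show ?thesis by (simp add: qe_def)
  qed
  have e0: "h 0 = 0" using g[of 0] c(1) by simp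
  have e1: "h 1 + h 3 = 0" using g[of 1] c(2) e0 by simp
  have e2: "h 1 * t0 + h 3 * t0^2 = 0" using g[of t0] c(3) e0 t0 by simp
  have "h 3 * t0 * (t0 - 1) = h 1 * t0 + h 3 * t0^2 - t0 * (h 1 + h 3)" by (simp add: algebra_simps power2_eq_square)
  then have "h 3 * t0 * (t0 - 1) = 0" using e1 e2 by simp
  then have h3: "h 3 = 0" using t00 t01 by simp
  then have "h 1 = 0" using e1 by simp
  then show ?thesis using g[of t] e0 h3 by simp
qed

lemma line_infinite:
  assumes "p \<noteq> q"
  shows "infinite (range (\<lambda>t::complex. (fst p + t * (fst q - fst p), snd p + t * (snd q - snd p))))"
proof -
  have "inj (\<lambda>t::complex. (fst p + t * (fst q - fst p), snd p + t * (snd q - snd p)))"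
    using assms by (auto simp: inj_def prod_eq_iff)
  then show ?thesis using infinite_UNIV_char_0 finite_imageD by blast
qed

definition pco :: "qvf \<Rightarrow> nat \<Rightarrow> complex" where
  "pco v k = (if k = 0 then v$0 else if k = 1 then v$1 else if k = 2 then v$2 else if k = 3 then v$3
     else if k = 4 then v$4 else v$5)"
definition qco :: "qvf \<Rightarrow> nat \<Rightarrow> complex" where
  "qco v k = (if k = 0 then v$6 else if k = 1 then v$7 else if k = 2 then v$8 else if k = 3 then v$9
     else if k = 4 then v$10 else v$11)"

lemma Pv_qe: "Pv v x y = qe (pco v) (x, y)" unfolding Pv_def qe_def pco_def by simp
lemma Qv_qe: "Qv v x y = qe (qco v) (x, y)" unfolding Qv_def qe_def qco_def by simp

lemma Sing_qe: "z \<in> Sing v \<longleftrightarrow> qe (pco v) z = 0 \<and> qe (qco v) z = 0"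
  unfolding Sing_def by (simp add: Pv_qe Qv_qe)

lemma detD_J: "detD v z = Jq (pco v) (qco v) z"
  unfolding detD_def Jq_def Px_def Py_def Qx_def Qy_def qdx_def qdy_def pco_def qco_def by simp
lemma trD_q: "trD v z = qdx (pco v) z + qdy (qco v) z"
  unfolding trD_def Px_def Qy_def qdx_def qdy_def pco_def qco_def by simp

lemma exhaust_12:
  fixes x :: 12
  shows "x = 0 \<or> x = 1 \<or> x = 2 \<or> x = 3 \<or> x = 4 \<or> x = 5 \<or> x = 6 \<or> x = 7 \<or> x = 8 \<or> x = 9 \<or> x = 10 \<or> x = 11"
proof (induct x)
  case (of_int z)
  then have "0 \<le> z" "z < 12" by simp_all
  then have "z = 0 \<or> z = 1 \<or> z = 2 \<or> z = 3 \<or> z = 4 \<or> z = 5 \<or> z = 6 \<or> z = 7 \<or> z = 8 \<or> z = 9 \<or> z = 10 \<or> z = 11" by presburger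
  then show ?case by auto
qed

lemma d12: "distinct [0::12,1,2,3,4,5,6,7,8,9,10,11]"
  by (simp only: distinct.simps list.set insert_iff empty_iff eq_numeral_iff_iszero bit0.iszero_numeral) simp

lemma qvf_eq:
  assumes "\<forall>k<6. pco u k = pco v k" "\<forall>k<6. qco u k = qco v k"
  shows "u = v"
proof -
  have "u $ i = v $ i" for i
    using exhaust_12[of i] assms unfolding all6 pco_def qco_def by auto
  then show ?thesis by (simp add: vec_eq_iff)
qed

lemma mk_qvf: "\<exists>u. \<forall>k<6. pco u k = p k \<and> qco u k = q k"
proof -
  define u :: qvf where "u = (\<chi> i. if i = 0 then p 0 else if i = 1 then p 1 else if i = 2 then p 2
     else if i = 3 then p 3 else if i = 4 then p 4 else if i = 5 then p 5 else if i = 6 then q 0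
     else if i = 7 then q 1 else if i = 8 then q 2 else if i = 9 then q 3 else if i = 10 then q 4 else q 5)"
  have "\<forall>k<6. pco u k = p k \<and> qco u k = q k"
    using d12 unfolding all6 pco_def qco_def u_def by simp
  then show ?thesis by blast
qed

lemma ncol:
  assumes fin: "finite (Sing v)" and p: "p \<in> Sing v" and q: "q \<in> Sing v" and r: "r \<in> Sing v"
    and pq: "p \<noteq> q" and rp: "r \<noteq> p" and rq: "r \<noteq> q"
  shows "Dl p q r \<noteq> 0"
proof
  assume D: "Dl p q r = 0"
  have "range (\<lambda>t::complex. (fst p + t * (fst q - fst p), snd p + t * (snd q - snd p))) \<subseteq> Sing v"
  proof clarify
    fix t :: complex
    show "(fst p + t * (fst q - fst p), snd p + t * (snd q - snd p)) \<in> Sing v"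
      unfolding Sing_qe
      using line_vanish[OF pq rp rq D, of "pco v"] line_vanish[OF pq rp rq D, of "qco v"] p q r
      unfolding Sing_qe by blast
  qed
  then show False using line_infinite[OF pq] fin finite_subset by blast
qed

lemma gp_of_sing:
  assumes fin: "finite (Sing v)" and "p1 \<in> Sing v" "p2 \<in> Sing v" "p3 \<in> Sing v" "p4 \<in> Sing v"
    and "p1 \<noteq> p2" "p1 \<noteq> p3" "p1 \<noteq> p4" "p2 \<noteq> p3" "p2 \<noteq> p4" "p3 \<noteq> p4"
  shows "gp p1 p2 p3 p4"
  unfolding gp_def using assms ncol[OF fin] by metis

lemma qdx_lin2: "qdx (\<lambda>k. a * c k + b * d k) z = a * qdx c z + b * qdx d z"
  unfolding qdx_def by (simp add: algebra_simps)
lemma qdy_lin2: "qdy (\<lambda>k. a * c k + b * d k) z = a * qdy c z + b * qdy d z"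
  unfolding qdy_def by (simp add: algebra_simps)
lemma qe_lin2: "qe (\<lambda>k. a * c k + b * d k) z = a * qe c z + b * qe d z"
  unfolding qe_def by (simp add: algebra_simps)

lemma coeff_cong:
  assumes "\<forall>k<6. c k = d k"
  shows "qe c z = qe d z" "qdx c z = qdx d z" "qdy c z = qdy d z"
  using assms unfolding all6 qe_def qdx_def qdy_def by simp_all

lemma J_lin:
  assumes "\<forall>k<6. c k = a * e k + b * f k" "\<forall>k<6. d k = a' * e k + b' * f k"
  shows "Jq c d z = (a * b' - b * a') * Jq e f z"
proof -
  have "qdx c z = a * qdx e z + b * qdx f z" "qdy c z = a * qdy e z + b * qdy f z"
       "qdx d z = a' * qdx e z + b' * qdx f z" "qdy d z = a' * qdy e z + b' * qdy f z"
    using coeff_cong[OF assms(1)] coeff_cong[OF assms(2)] qdx_lin2 qdy_lin2 by metis+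
  then show ?thesis unfolding Jq_def by (simp add: algebra_simps)
qed

lemma EJ:
  assumes fin: "finite (Sing v)" and s: "p1 \<in> Sing v" "p2 \<in> Sing v" "p3 \<in> Sing v" "p4 \<in> Sing v"
    and d: "p1 \<noteq> p2" "p1 \<noteq> p3" "p1 \<noteq> p4" "p2 \<noteq> p3" "p2 \<noteq> p4" "p3 \<noteq> p4"
  shows "gp p1 p2 p3 p4 \<and> (\<exists>k.
     detD v p1 = k * (Dl p1 p3 p4 * Dl p1 p2 p4 * Dl p1 p2 p3) \<and>
     detD v p2 = k * (- Dl p2 p3 p4 * Dl p1 p2 p4 * Dl p1 p2 p3) \<and>
     detD v p3 = k * (Dl p2 p3 p4 * Dl p1 p3 p4 * Dl p1 p2 p3) \<and>
     detD v p4 = k * (- Dl p2 p3 p4 * Dl p1 p3 p4 * Dl p1 p2 p4))"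
proof -
  have g: "gp p1 p2 p3 p4" by (rule gp_of_sing[OF fin s d])
  obtain a b where ab: "\<forall>k<6. pco v k = a * C1 p1 p2 p3 p4 k + b * C2 p1 p2 p3 p4 k"
    using pencil[OF g] s unfolding Sing_qe by meson
  obtain a' b' where ab': "\<forall>k<6. qco v k = a' * C1 p1 p2 p3 p4 k + b' * C2 p1 p2 p3 p4 k"
    using pencil[OF g] s unfolding Sing_qe by meson
  have "detD v z = (a * b' - b * a') * Jq (C1 p1 p2 p3 p4) (C2 p1 p2 p3 p4) z" for z
    unfolding detD_J by (rule J_lin[OF ab ab'])
  then show ?thesis using g J_C by metis
qed

lemma mset_bij:
  assumes "finite A" "finite B" "image_mset f (mset_set A) = image_mset g (mset_set B)"
  shows "\<exists>h. bij_betw h A B \<and> (\<forall>a\<in>A. g (h a) = f a)"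
  using assms
proof (induction A arbitrary: B rule: finite_induct)
  case empty
  then have "B = {}" by (metis image_mset_is_empty_iff mset_set.infinite mset_set_empty_iff)
  then show ?case by (simp add: bij_betw_def)
next
  case (insert a A)
  then have "f a \<in># image_mset g (mset_set B)" by (metis image_mset_add_mset mset_set.insert union_single_eq_member)
  then obtain b where b: "b \<in> B" "g b = f a" using insert.prems(1) by auto
  have mB: "mset_set B = add_mset b (mset_set (B - {b}))" using b(1) insert.prems(1) by (simp add: mset_set.remove)
  have "add_mset (f a) (image_mset f (mset_set A)) = add_mset (g b) (image_mset g (mset_set (B - {b})))"
    using insert.prems(2) insert.hyps mB by simp
  then have "image_mset f (mset_set A) = image_mset g (mset_set (B - {b}))" using b(2) by simp
  then obtain h where h: "bij_betw h A (B - {b})" "\<forall>a\<in>A. g (h a) = f a"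
    using insert.IH[of "B - {b}"] insert.prems(1) by auto
  define h' where "h' = h(a := b)"
  have "bij_betw h' (insert a A) B"
  proof -
    have e: "bij_betw h' A (B - {b})" using h(1) insert.hyps(2) unfolding h'_def
      by (metis bij_betw_cong fun_upd_other)
    have "bij_betw h' (insert a A) (insert b (B - {b}))"
      using e insert.hyps(2) unfolding bij_betw_def h'_def
      by (auto simp: inj_on_def image_iff split: if_splits)
    then show ?thesis using b(1) by (simp add: insert_absorb)
  qed
  moreover have "\<forall>x\<in>insert a A. g (h' x) = f x" using h(2) b(2) insert.hyps(2) unfolding h'_def by auto
  ultimately show ?case by blast
qed

lemma push:
  fixes al be ga de ep ph :: complex
  assumes Dn: "al * de - be * ga \<noteq> 0"
    and a: "a = de / (al * de - be * ga)" and b: "b = - be / (al * de - be * ga)"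
    and c: "c = - ga / (al * de - be * ga)" and d: "d = al / (al * de - be * ga)"
    and e: "e = - (a * ep + b * ph)" and f: "f = - (c * ep + d * ph)"
    and S: "S = (\<lambda>z. (al * fst z + be * snd z + ep, ga * fst z + de * snd z + ph))"
  shows "a * d - b * c \<noteq> 0 \<and> (\<exists>u. vf u = pushfwd a b c d e f w \<and> (\<forall>z. z \<in> Sing u \<longleftrightarrow> S z \<in> Sing w) \<and>
     (\<forall>z. trD u z = trD w (S z) \<and> detD u z = detD w (S z)))"
proof -
  define D where "D = al * de - be * ga"
  have D0: "D \<noteq> 0" using Dn D_def by simp
  have adbc: "a * d - b * c = 1 / D" using D0 unfolding a b c d D_def[symmetric] by (simp add: field_simps) (simp add: D_def algebra_simps)
  define T where "T = aff2 a b c d e f"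
  have TS: "T (S z) = z" for z
    using D0 unfolding T_def aff2_def S a b c d e f D_def[symmetric]
    by (simp add: prod_eq_iff field_simps) (simp add: D_def algebra_simps)
  have ST: "S (T z) = z" for z
    using D0 unfolding T_def aff2_def S a b c d e f D_def[symmetric]
    by (simp add: prod_eq_iff field_simps) (simp add: D_def algebra_simps)
  have invT: "inv T = S" by (rule inv_equality[OF ST TS])
  define P1 where "P1 = qcomp (pco w) al be ga de ep ph"
  define Q1 where "Q1 = qcomp (qco w) al be ga de ep ph"
  obtain u where u: "\<forall>k<6. pco u k = a * P1 k + b * Q1 k \<and> qco u k = c * P1 k + d * Q1 k"
    using mk_qvf[of "\<lambda>k. a * P1 k + b * Q1 k" "\<lambda>k. c * P1 k + d * Q1 k"] by blast
  have up: "\<forall>k<6. pco u k = a * P1 k + b * Q1 k" and uq: "\<forall>k<6. qco u k = c * P1 k + d * Q1 k" using u by auto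
  have Sz: "S z = (al * fst z + be * snd z + ep, ga * fst z + de * snd z + ph)" for z using S by simp
  have P1e: "qe P1 z = qe (pco w) (S z)" for z unfolding P1_def Sz using qe_qcomp[of "pco w" al "fst z" be "snd z"] by simp
  have Q1e: "qe Q1 z = qe (qco w) (S z)" for z unfolding Q1_def Sz using qe_qcomp[of "qco w" al "fst z" be "snd z"] by simp
  have ue: "qe (pco u) z = a * qe (pco w) (S z) + b * qe (qco w) (S z)"
       "qe (qco u) z = c * qe (pco w) (S z) + d * qe (qco w) (S z)" for z
    using coeff_cong(1)[OF up] coeff_cong(1)[OF uq] qe_lin2 P1e Q1e by metis+
  have vfu: "vf u = pushfwd a b c d e f w"
  proof
    fix z
    show "vf u z = pushfwd a b c d e f w z"
      unfolding pushfwd_def T_def[symmetric] invT vf_def lin2_def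
      using ue[of z] by (simp add: Pv_qe Qv_qe)
  qed
  have sing: "z \<in> Sing u \<longleftrightarrow> S z \<in> Sing w" for z
  proof -
    have "a * X + b * Y = 0 \<and> c * X + d * Y = 0 \<longleftrightarrow> X = 0 \<and> Y = 0" for X Y :: complex
    proof
      assume h: "a * X + b * Y = 0 \<and> c * X + d * Y = 0"
      have "(a * d - b * c) * X = d * (a * X + b * Y) - b * (c * X + d * Y)"
           "(a * d - b * c) * Y = a * (c * X + d * Y) - c * (a * X + b * Y)" by (simp_all add: algebra_simps)
      then have "(a * d - b * c) * X = 0" "(a * d - b * c) * Y = 0" using h by simp_all
      moreover have "a * d - b * c \<noteq> 0" using adbc D0 by simp
      ultimately show "X = 0 \<and> Y = 0" by simp
    qed simp
    then show ?thesis unfolding Sing_qe ue by blast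
  qed
  have Px1: "qdx P1 z = al * qdx (pco w) (S z) + ga * qdy (pco w) (S z)"
   and Py1: "qdy P1 z = be * qdx (pco w) (S z) + de * qdy (pco w) (S z)"
   and Qx1: "qdx Q1 z = al * qdx (qco w) (S z) + ga * qdy (qco w) (S z)"
   and Qy1: "qdy Q1 z = be * qdx (qco w) (S z) + de * qdy (qco w) (S z)" for z
    unfolding P1_def Q1_def Sz using qdx_qcomp[of _ al be ga de ep ph "fst z" "snd z"] qdy_qcomp[of _ al be ga de ep ph "fst z" "snd z"]
    by simp_all
  have du: "qdx (pco u) z = a * qdx P1 z + b * qdx Q1 z" "qdy (pco u) z = a * qdy P1 z + b * qdy Q1 z"
           "qdx (qco u) z = c * qdx P1 z + d * qdx Q1 z" "qdy (qco u) z = c * qdy P1 z + d * qdy Q1 z" for z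
    using coeff_cong(2,3)[OF up] coeff_cong(2,3)[OF uq] qdx_lin2 qdy_lin2 by metis+
  have tr: "trD u z = trD w (S z)" for z
    unfolding trD_q du Px1 Py1 Qx1 Qy1 a b c d D_def[symmetric] using D0
    by (simp add: field_simps) (simp add: D_def algebra_simps)
  have dt: "detD u z = detD w (S z)" for z
    unfolding detD_J Jq_def du Px1 Py1 Qx1 Qy1 a b c d D_def[symmetric] using D0
    by (simp add: field_simps) (simp add: D_def algebra_simps)
  show ?thesis using vfu sing tr dt adbc D0 by auto
qed

lemma card4:
  assumes "card S = 4"
  shows "\<exists>a b c d. S = {a, b, c, d} \<and> a \<noteq> b \<and> a \<noteq> c \<and> a \<noteq> d \<and> b \<noteq> c \<and> b \<noteq> d \<and> c \<noteq> d"
proof -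
  have "card S = Suc (Suc (Suc (Suc 0)))" using assms by simp
  then show ?thesis unfolding card_Suc_eq by fastforce
qed

lemma isol: "finite (Sing v) \<Longrightarrow> isolated_sings v"
  unfolding isolated_sings_def using islimpt_finite by blast

lemma ratio:
  fixes X Y Ep Eq Bp Bq :: complex
  assumes "X * Ep = Y * Eq" "X * Bp = Y * Bq" "X \<noteq> 0"
  shows "Ep * Bq = Bp * Eq"
proof -
  have "(Ep * Bq - Bp * Eq) * X = (X * Ep) * Bq - (X * Bp) * Eq" by (simp add: algebra_simps)
  also have "\<dots> = 0" using assms by (simp add: algebra_simps)
  finally show ?thesis using assms(3) by simp
qed

lemma Dl_self2: "Dl p p q = 0" unfolding Dl_def by simp

lemma Dl_swap: "Dl p r q = - Dl p q r" unfolding Dl_def by (simp add: algebra_simps)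

lemma part1:
  assumes fv: "finite (Sing v)" "card (Sing v) = 4" "\<forall>p\<in>Sing v. detD v p \<noteq> 0"
      and fw: "finite (Sing w)" "card (Sing w) = 4" "\<forall>p\<in>Sing w. detD w p \<noteq> 0"
      and sp: "spectra v = spectra w"
  shows "\<exists>a b c d e f. a * d - b * c \<noteq> 0 \<and> (\<exists>u. vf u = pushfwd a b c d e f w \<and> (u = v \<or> twin v u))"
proof -
  obtain q1 q2 q3 q4 where Q: "Sing w = {q1,q2,q3,q4}" and dq: "q1 \<noteq> q2" "q1 \<noteq> q3" "q1 \<noteq> q4" "q2 \<noteq> q3" "q2 \<noteq> q4" "q3 \<noteq> q4"
    using card4[OF fw(2)] by blast
  have "image_mset (\<lambda>p. (trD w p, detD w p)) (mset_set (Sing w)) = image_mset (\<lambda>p. (trD v p, detD v p)) (mset_set (Sing v))"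
    using sp unfolding spectra_def by simp
  then obtain h where h: "bij_betw h (Sing w) (Sing v)" and hs: "\<forall>q\<in>Sing w. (trD v (h q), detD v (h q)) = (trD w q, detD w q)"
    using mset_bij[OF fw(1) fv(1)] by blast
  define p1 p2 p3 p4 where "p1 = h q1" "p2 = h q2" "p3 = h q3" "p4 = h q4"
  have qin: "q1 \<in> Sing w" "q2 \<in> Sing w" "q3 \<in> Sing w" "q4 \<in> Sing w" using Q by auto
  have pin: "p1 \<in> Sing v" "p2 \<in> Sing v" "p3 \<in> Sing v" "p4 \<in> Sing v"
    unfolding p1_p2_p3_p4_def using qin bij_betw_apply[OF h] by auto
  have inj: "inj_on h (Sing w)" using h bij_betw_imp_inj_on by blast
  have dp: "p1 \<noteq> p2" "p1 \<noteq> p3" "p1 \<noteq> p4" "p2 \<noteq> p3" "p2 \<noteq> p4" "p3 \<noteq> p4"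
    unfolding p1_p2_p3_p4_def using dq qin inj_on_eq_iff[OF inj] by metis+
  have SV: "Sing v = {p1,p2,p3,p4}"
    using bij_betw_imp_surj_on[OF h] Q unfolding p1_p2_p3_p4_def by auto
  have trp: "trD v p1 = trD w q1" "trD v p2 = trD w q2" "trD v p3 = trD w q3" "trD v p4 = trD w q4"
    and dtp: "detD v p1 = detD w q1" "detD v p2 = detD w q2" "detD v p3 = detD w q3" "detD v p4 = detD w q4"
    using hs qin unfolding p1_p2_p3_p4_def by auto
  have dnz: "detD w q1 \<noteq> 0" "detD w q2 \<noteq> 0" "detD w q3 \<noteq> 0" "detD w q4 \<noteq> 0" using fw(3) qin by auto
  obtain kp where gpp: "gp p1 p2 p3 p4" and kp:
     "detD v p1 = kp * (Dl p1 p3 p4 * Dl p1 p2 p4 * Dl p1 p2 p3)"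
     "detD v p2 = kp * (- Dl p2 p3 p4 * Dl p1 p2 p4 * Dl p1 p2 p3)"
     "detD v p3 = kp * (Dl p2 p3 p4 * Dl p1 p3 p4 * Dl p1 p2 p3)"
     "detD v p4 = kp * (- Dl p2 p3 p4 * Dl p1 p3 p4 * Dl p1 p2 p4)"
    using EJ[OF fv(1) pin dp] by blast
  obtain kq where gpq: "gp q1 q2 q3 q4" and kq:
     "detD w q1 = kq * (Dl q1 q3 q4 * Dl q1 q2 q4 * Dl q1 q2 q3)"
     "detD w q2 = kq * (- Dl q2 q3 q4 * Dl q1 q2 q4 * Dl q1 q2 q3)"
     "detD w q3 = kq * (Dl q2 q3 q4 * Dl q1 q3 q4 * Dl q1 q2 q3)"
     "detD w q4 = kq * (- Dl q2 q3 q4 * Dl q1 q3 q4 * Dl q1 q2 q4)"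
    using EJ[OF fw(1) qin dq] by blast
  define Ap Bp Cp Ep where "Ap = Dl p2 p3 p4" "Bp = Dl p1 p3 p4" "Cp = Dl p1 p2 p4" "Ep = Dl p1 p2 p3"
  define Aq Bq Cq Eq where "Aq = Dl q2 q3 q4" "Bq = Dl q1 q3 q4" "Cq = Dl q1 q2 q4" "Eq = Dl q1 q2 q3"
  have Ep0: "Ep \<noteq> 0" and Eq0: "Eq \<noteq> 0" using gpp gpq unfolding gp_def Ap_Bp_Cp_Ep_def Aq_Bq_Cq_Eq_def by auto
  have r1: "Ep * Bq = Bp * Eq"
  proof (rule ratio)
    show "(kp * Ap * Cp) * Ep = (kq * Aq * Cq) * Eq" using kp(2) kq(2) dtp(2) unfolding Ap_Bp_Cp_Ep_def Aq_Bq_Cq_Eq_def by (simp add: algebra_simps)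
    show "(kp * Ap * Cp) * Bp = (kq * Aq * Cq) * Bq" using kp(4) kq(4) dtp(4) unfolding Ap_Bp_Cp_Ep_def Aq_Bq_Cq_Eq_def by (simp add: algebra_simps)
    show "kp * Ap * Cp \<noteq> 0" using kp(2) dtp(2) dnz(2) unfolding Ap_Bp_Cp_Ep_def by auto
  qed
  have r2: "Ep * Cq = Cp * Eq"
  proof (rule ratio)
    show "(kp * Ap * Bp) * Ep = (kq * Aq * Bq) * Eq" using kp(3) kq(3) dtp(3) unfolding Ap_Bp_Cp_Ep_def Aq_Bq_Cq_Eq_def by (simp add: algebra_simps)
    show "(kp * Ap * Bp) * Cp = (kq * Aq * Bq) * Cq" using kp(4) kq(4) dtp(4) unfolding Ap_Bp_Cp_Ep_def Aq_Bq_Cq_Eq_def by (simp add: algebra_simps)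
    show "kp * Ap * Bp \<noteq> 0" using kp(3) dtp(3) dnz(3) unfolding Ap_Bp_Cp_Ep_def by auto
  qed
  define e1 e2 f1 f2 where "e1 = fst q2 - fst q1" "e2 = snd q2 - snd q1" "f1 = fst q3 - fst q1" "f2 = snd q3 - snd q1"
  define al be ga de where "al = (e1 * (snd p3 - snd p1) - f1 * (snd p2 - snd p1)) / Ep"
    "be = (f1 * (fst p2 - fst p1) - e1 * (fst p3 - fst p1)) / Ep"
    "ga = (e2 * (snd p3 - snd p1) - f2 * (snd p2 - snd p1)) / Ep"
    "de = (f2 * (fst p2 - fst p1) - e2 * (fst p3 - fst p1)) / Ep"
  define ep ph where "ep = fst q1 - al * fst p1 - be * snd p1" "ph = snd q1 - ga * fst p1 - de * snd p1"
  define S where "S = (\<lambda>z::pt. (al * fst z + be * snd z + ep, ga * fst z + de * snd z + ph))"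
  have Sform: "S z = (fst q1 + (Dl p1 z p3 / Ep) * e1 + (Dl p1 p2 z / Ep) * f1, snd q1 + (Dl p1 z p3 / Ep) * e2 + (Dl p1 p2 z / Ep) * f2)" for z
    using Ep0 unfolding S_def ep_ph_def al_be_ga_de_def Dl_def
    by (simp add: prod_eq_iff field_simps)
  have poly: "(e1 * (snd p3 - snd p1) - f1 * (snd p2 - snd p1)) * (f2 * (fst p2 - fst p1) - e2 * (fst p3 - fst p1))
      - (f1 * (fst p2 - fst p1) - e1 * (fst p3 - fst p1)) * (e2 * (snd p3 - snd p1) - f2 * (snd p2 - snd p1)) = Eq * Ep"
    unfolding Aq_Bq_Cq_Eq_def e1_e2_f1_f2_def Ap_Bp_Cp_Ep_def Dl_def by (simp add: algebra_simps)
  have "al * de - be * ga = ((e1 * (snd p3 - snd p1) - f1 * (snd p2 - snd p1)) * (f2 * (fst p2 - fst p1) - e2 * (fst p3 - fst p1))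
      - (f1 * (fst p2 - fst p1) - e1 * (fst p3 - fst p1)) * (e2 * (snd p3 - snd p1) - f2 * (snd p2 - snd p1))) / (Ep * Ep)"
    unfolding al_be_ga_de_def using Ep0 by (simp add: field_simps)
  then have det: "al * de - be * ga = Eq / Ep" unfolding poly using Ep0 by simp
  have det0: "al * de - be * ga \<noteq> 0" using det Ep0 Eq0 by simp
  have Sp: "S p1 = q1" "S p2 = q2" "S p3 = q3" "S p4 = q4"
  proof -
    show "S p1 = q1" unfolding Sform by (simp add: Dl_self Dl_self2)
    show "S p2 = q2" unfolding Sform using Ep0 by (simp add: Dl_self Ap_Bp_Cp_Ep_def e1_e2_f1_f2_def)
    show "S p3 = q3" unfolding Sform using Ep0 by (simp add: Dl_self Ap_Bp_Cp_Ep_def e1_e2_f1_f2_def)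
    have s1: "Dl p1 p4 p3 / Ep = Dl q1 q4 q3 / Eq" unfolding Dl_swap[of p1 p4 p3] Dl_swap[of q1 q4 q3]
      using r1 Ep0 Eq0 unfolding Ap_Bp_Cp_Ep_def Aq_Bq_Cq_Eq_def by (simp add: field_simps)
    have s2: "Dl p1 p2 p4 / Ep = Dl q1 q2 q4 / Eq"
      using r2 Ep0 Eq0 unfolding Ap_Bp_Cp_Ep_def Aq_Bq_Cq_Eq_def by (simp add: field_simps)
    have "q4 = (fst q1 + (Dl q1 q4 q3 / Eq) * e1 + (Dl q1 q2 q4 / Eq) * f1, snd q1 + (Dl q1 q4 q3 / Eq) * e2 + (Dl q1 q2 q4 / Eq) * f2)"
      using affine_coords[of q1 q2 q3 q4] Eq0 unfolding e1_e2_f1_f2_def Aq_Bq_Cq_Eq_def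
      by (simp add: prod_eq_iff algebra_simps)
    then show "S p4 = q4" unfolding Sform s1 s2 by simp
  qed
  have Sinj: "S z = S z' \<Longrightarrow> z = z'" for z z'
  proof -
    assume "S z = S z'"
    then have h1: "al * (fst z - fst z') + be * (snd z - snd z') = 0" "ga * (fst z - fst z') + de * (snd z - snd z') = 0"
      unfolding S_def by (simp_all add: algebra_simps)
    have "(al * de - be * ga) * (fst z - fst z') = de * (al * (fst z - fst z') + be * (snd z - snd z')) - be * (ga * (fst z - fst z') + de * (snd z - snd z'))"
         "(al * de - be * ga) * (snd z - snd z') = al * (ga * (fst z - fst z') + de * (snd z - snd z')) - ga * (al * (fst z - fst z') + be * (snd z - snd z'))"
      by (simp_all add: algebra_simps)
    then have "(al * de - be * ga) * (fst z - fst z') = 0" "(al * de - be * ga) * (snd z - snd z') = 0" using h1 by simp_all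
    then show "z = z'" using det0 by (simp add: prod_eq_iff)
  qed
  obtain u where ad: "(de / (al * de - be * ga)) * (al / (al * de - be * ga)) - (- be / (al * de - be * ga)) * (- ga / (al * de - be * ga)) \<noteq> 0"
    and u: "vf u = pushfwd (de / (al * de - be * ga)) (- be / (al * de - be * ga)) (- ga / (al * de - be * ga)) (al / (al * de - be * ga))
        (- ((de / (al * de - be * ga)) * ep + (- be / (al * de - be * ga)) * ph)) (- ((- ga / (al * de - be * ga)) * ep + (al / (al * de - be * ga)) * ph)) w"
    and us: "\<forall>z. z \<in> Sing u \<longleftrightarrow> S z \<in> Sing w" and ut: "\<forall>z. trD u z = trD w (S z) \<and> detD u z = detD w (S z)"
    using push[OF det0 refl refl refl refl refl refl S_def, of w] by blast
  have SU: "Sing u = Sing v"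
  proof
    show "Sing u \<subseteq> Sing v"
    proof
      fix z assume "z \<in> Sing u"
      then have "S z \<in> {q1,q2,q3,q4}" using us Q by auto
      then have "S z = S p1 \<or> S z = S p2 \<or> S z = S p3 \<or> S z = S p4" using Sp by auto
      then have "z = p1 \<or> z = p2 \<or> z = p3 \<or> z = p4" using Sinj by blast
      then show "z \<in> Sing v" using SV by auto
    qed
    have "p1 \<in> Sing u" "p2 \<in> Sing u" "p3 \<in> Sing u" "p4 \<in> Sing u" using us Sp qin by metis+
    then show "Sing v \<subseteq> Sing u" using SV by auto
  qed
  have "u = v \<or> twin v u"
  proof (cases "u = v")
    case False
    have "\<forall>p\<in>Sing v. trD v p = trD u p \<and> detD v p = detD u p"
    proof
      fix p assume "p \<in> Sing v"
      then have "p = p1 \<or> p = p2 \<or> p = p3 \<or> p = p4" using SV by auto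
      moreover have "trD u p = trD w (S p)" "detD u p = detD w (S p)" using ut by blast+
      ultimately show "trD v p = trD u p \<and> detD v p = detD u p" using Sp trp dtp by auto
    qed
    then show ?thesis unfolding twin_def using isol fv(1) SU False by auto
  qed simp
  then show ?thesis using ad u by blast
qed

definition disc4 :: "complex \<Rightarrow> complex \<Rightarrow> complex \<Rightarrow> complex \<Rightarrow> complex \<Rightarrow> complex" where
  "disc4 a b c d e = 256*a^3*e^3 - 192*a^2*b*d*e^2 - 128*a^2*c^2*e^2 + 144*a^2*c*d^2*e - 27*a^2*d^4
      + 144*a*b^2*c*e^2 - 6*a*b^2*d^2*e - 80*a*b*c^2*d*e + 18*a*b*c*d^3 + 16*a*c^4*e - 4*a*c^3*d^2
      - 27*b^4*e^2 + 18*b^3*c*d*e - 4*b^3*d^3 - 4*b^2*c^3*e + b^2*c^2*d^2"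

lemma disc_double:
  assumes "e + d * r + c * r^2 + b * r^3 + a * r^4 = 0" "d + 2 * c * r + 3 * b * r^2 + 4 * a * r^3 = 0"
  shows "disc4 a b c d e = 0"
proof -
  have d: "d = - (2 * c * r + 3 * b * r^2 + 4 * a * r^3)" using assms(2) by (simp add: algebra_simps add_eq_0_iff)
  have e: "e = 3 * a * r^4 + 2 * b * r^3 + c * r^2" using assms(1) unfolding d by (simp add: algebra_simps add_eq_0_iff power_def)
  show ?thesis unfolding disc4_def d e by (simp add: algebra_simps power_def)
qed

lemma quad_res:
  fixes a b c a' b' c' y :: complex
  assumes P: "a * y^2 + b * y + c = 0" and Q: "a' * y^2 + b' * y + c' = 0"
  shows "(a * c' - a' * c)^2 - (a * b' - a' * b) * (b * c' - b' * c) = 0"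
proof -
  define A B C where "A = a * c' - a' * c" "B = a * b' - a' * b" "C = b * c' - b' * c"
  have L: "B * y + A = 0"
  proof -
    have "B * y + A = a * (a' * y^2 + b' * y + c') - a' * (a * y^2 + b * y + c)"
      unfolding A_B_C_def by (simp add: algebra_simps)
    then show ?thesis using P Q by simp
  qed
  have M: "A * y^2 + C * y = 0"
  proof -
    have "A * y^2 + C * y = c' * (a * y^2 + b * y + c) - c * (a' * y^2 + b' * y + c')"
      unfolding A_B_C_def by (simp add: algebra_simps power2_eq_square)
    then show ?thesis using P Q by simp
  qed
  show ?thesis unfolding A_B_C_def[symmetric]
  proof (cases "B = 0")
    case True
    then have "A = 0" using L by simp
    then show "A^2 - B * C = 0" using True by simp
  next
    case False
    then have y: "y = - A / B" using L by (simp add: field_simps add_eq_0_iff)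
    have "A * A^2 - A * B * C = 0"
      using M False unfolding y by (simp add: field_simps power2_eq_square)
    then have "A * (A^2 - B * C) = 0" by (simp add: algebra_simps)
    moreover have "A = 0 \<Longrightarrow> A^2 - B * C = 0"
    proof -
      assume A0: "A = 0"
      then have "y = 0" using y by simp
      then have "c = 0" "c' = 0" using P Q by simp_all
      then show ?thesis unfolding A_B_C_def by simp
    qed
    ultimately show "A^2 - B * C = 0" by auto
  qed
qed

lemma quad_root:
  fixes a b c :: complex
  assumes "a \<noteq> 0"
  shows "\<exists>y. a * y^2 + b * y + c = 0"
proof -
  define y where "y = (- b + csqrt (b^2 - 4 * a * c)) / (2 * a)"
  have s: "(csqrt (b^2 - 4 * a * c))^2 = b^2 - 4 * a * c" by simp
  have "a * y^2 + b * y + c = ((csqrt (b^2 - 4 * a * c))^2 - (b^2 - 4 * a * c)) / (4 * a)"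
    unfolding y_def using assms by (simp add: field_simps power2_eq_square)
  then show ?thesis using s by auto
qed

lemma quad_res_conv:
  fixes a b c a' b' c' :: complex
  assumes a: "a \<noteq> 0" and R: "(a * c' - a' * c)^2 - (a * b' - a' * b) * (b * c' - b' * c) = 0"
  shows "\<exists>y. a * y^2 + b * y + c = 0 \<and> a' * y^2 + b' * y + c' = 0"
proof -
  define A B C where "A = a * c' - a' * c" "B = a * b' - a' * b" "C = b * c' - b' * c"
  have R': "A^2 - B * C = 0" using R unfolding A_B_C_def .
  have id: "a * (a' * y^2 + b' * y + c') = a' * (a * y^2 + b * y + c) + (B * y + A)" for y
    unfolding A_B_C_def by (simp add: algebra_simps)
  show ?thesis
  proof (cases "B = 0")
    case True
    then have A: "A = 0" using R' by simp
    obtain y where y: "a * y^2 + b * y + c = 0" using quad_root[OF a] by blast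
    have "a * (a' * y^2 + b' * y + c') = 0" using id[of y] y A True by simp
    then show ?thesis using y a by auto
  next
    case False
    define y where "y = - A / B"
    have L: "B * y + A = 0" unfolding y_def using False by simp
    have key: "a * A^2 - b * A * B + c * B^2 = a * (A^2 - B * C)"
      unfolding A_B_C_def by (simp add: algebra_simps power2_eq_square)
    have "a * y^2 + b * y + c = (a * A^2 - b * A * B + c * B^2) / B^2"
      unfolding y_def using False by (simp add: field_simps power2_eq_square)
    then have P: "a * y^2 + b * y + c = 0" unfolding key R' by simp
    have "a * (a' * y^2 + b' * y + c') = 0" using id[of y] P L by simp
    then show ?thesis using P a by auto
  qed
qed

definition rA0 where "rA0 c d = c 5 * d 0 - d 5 * c 0"
definition rA1 where "rA1 c d = c 5 * d 1 - d 5 * c 1"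
definition rA2 where "rA2 c d = c 5 * d 3 - d 5 * c 3"
definition rB0 where "rB0 c d = c 5 * d 2 - d 5 * c 2"
definition rB1 where "rB1 c d = c 5 * d 4 - d 5 * c 4"
definition rC0 where "rC0 c d = c 2 * d 0 - d 2 * c 0"
definition rC1 where "rC1 c d = c 2 * d 1 + c 4 * d 0 - d 2 * c 1 - d 4 * c 0"
definition rC2 where "rC2 c d = c 2 * d 3 + c 4 * d 1 - d 2 * c 3 - d 4 * c 1"
definition rC3 where "rC3 c d = c 4 * d 3 - d 4 * c 3"

definition R0 :: "(nat \<Rightarrow> complex) \<Rightarrow> (nat \<Rightarrow> complex) \<Rightarrow> complex" where
  "R0 c d = rA0 c d ^ 2 - rB0 c d * rC0 c d"
definition R1 :: "(nat \<Rightarrow> complex) \<Rightarrow> (nat \<Rightarrow> complex) \<Rightarrow> complex" where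
  "R1 c d = 2 * rA0 c d * rA1 c d - rB0 c d * rC1 c d - rB1 c d * rC0 c d"
definition R2 :: "(nat \<Rightarrow> complex) \<Rightarrow> (nat \<Rightarrow> complex) \<Rightarrow> complex" where
  "R2 c d = rA1 c d ^ 2 + 2 * rA0 c d * rA2 c d - rB0 c d * rC2 c d - rB1 c d * rC1 c d"
definition R3 :: "(nat \<Rightarrow> complex) \<Rightarrow> (nat \<Rightarrow> complex) \<Rightarrow> complex" where
  "R3 c d = 2 * rA1 c d * rA2 c d - rB0 c d * rC3 c d - rB1 c d * rC2 c d"
definition R4 :: "(nat \<Rightarrow> complex) \<Rightarrow> (nat \<Rightarrow> complex) \<Rightarrow> complex" where
  "R4 c d = rA2 c d ^ 2 - rB1 c d * rC3 c d"

definition Rp :: "(nat \<Rightarrow> complex) \<Rightarrow> (nat \<Rightarrow> complex) \<Rightarrow> complex poly" where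
  "Rp c d = [:R0 c d, R1 c d, R2 c d, R3 c d, R4 c d:]"

lemma poly_Rp: "poly (Rp c d) x =
   (c 5 * (d 0 + d 1 * x + d 3 * x^2) - d 5 * (c 0 + c 1 * x + c 3 * x^2))^2
   - (c 5 * (d 2 + d 4 * x) - d 5 * (c 2 + c 4 * x)) * ((c 2 + c 4 * x) * (d 0 + d 1 * x + d 3 * x^2) - (d 2 + d 4 * x) * (c 0 + c 1 * x + c 3 * x^2))"
  unfolding Rp_def R0_def R1_def R2_def R3_def R4_def rA0_def rA1_def rA2_def rB0_def rB1_def rC0_def rC1_def rC2_def rC3_def
  by (simp add: algebra_simps power2_eq_square)

lemma qe_y: "qe c (x, y) = c 5 * y^2 + (c 2 + c 4 * x) * y + (c 0 + c 1 * x + c 3 * x^2)"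
  unfolding qe_def by (simp add: algebra_simps power2_eq_square)

lemma sing_root: "qe c (x, y) = 0 \<Longrightarrow> qe d (x, y) = 0 \<Longrightarrow> poly (Rp c d) x = 0"
  unfolding poly_Rp qe_y by (rule quad_res)

lemma root_sing: "c 5 \<noteq> 0 \<Longrightarrow> poly (Rp c d) x = 0 \<Longrightarrow> \<exists>y. qe c (x, y) = 0 \<and> qe d (x, y) = 0"
  unfolding poly_Rp qe_y by (rule quad_res_conv)

lemma Rp_sqfree:
  assumes "disc4 (R4 c d) (R3 c d) (R2 c d) (R1 c d) (R0 c d) \<noteq> 0"
  shows "rsquarefree (Rp c d)"
  unfolding rsquarefree_roots
proof (intro allI notI)
  fix r assume h: "poly (Rp c d) r = 0 \<and> poly (pderiv (Rp c d)) r = 0"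
  have "R0 c d + R1 c d * r + R2 c d * r^2 + R3 c d * r^3 + R4 c d * r^4 = 0"
    using h unfolding Rp_def by (simp add: algebra_simps power_def)
  moreover have "R1 c d + 2 * R2 c d * r + 3 * R3 c d * r^2 + 4 * R4 c d * r^3 = 0"
    using h unfolding Rp_def by (simp add: pderiv_pCons algebra_simps power_def)
  ultimately show False using disc_double assms by blast
qed

lemma Rp_card:
  assumes "R4 c d \<noteq> 0" "disc4 (R4 c d) (R3 c d) (R2 c d) (R1 c d) (R0 c d) \<noteq> 0"
  shows "card {x. poly (Rp c d) x = 0} = 4"
proof -
  have sq: "rsquarefree (Rp c d)" by (rule Rp_sqfree[OF assms(2)])
  have deg: "degree (Rp c d) = 4" using assms(1) unfolding Rp_def by simp
  have "degree (Rp c d) = degree (smult (lead_coeff (Rp c d)) (\<Prod>z|poly (Rp c d) z = 0. [:-z, 1:]))"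
    using complex_poly_decompose_rsquarefree[OF sq] by simp
  also have "\<dots> = degree (\<Prod>z|poly (Rp c d) z = 0. [:-z, 1:])" using deg assms(1) by (simp add: Rp_def)
  also have "\<dots> = (\<Sum>z|poly (Rp c d) z = 0. degree [:-z, 1:])"
    by (rule degree_prod_sum_eq) simp
  also have "\<dots> = card {x. poly (Rp c d) x = 0}" by simp
  finally show ?thesis using deg by simp
qed

lemma four_points:
  assumes a5: "pco v 5 \<noteq> 0" and r4: "R4 (pco v) (qco v) \<noteq> 0"
    and ds: "disc4 (R4 (pco v) (qco v)) (R3 (pco v) (qco v)) (R2 (pco v) (qco v)) (R1 (pco v) (qco v)) (R0 (pco v) (qco v)) \<noteq> 0"
  shows "finite (Sing v) \<and> (\<exists>p1 p2 p3 p4. p1 \<in> Sing v \<and> p2 \<in> Sing v \<and> p3 \<in> Sing v \<and> p4 \<in> Sing v \<and>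
     p1 \<noteq> p2 \<and> p1 \<noteq> p3 \<and> p1 \<noteq> p4 \<and> p2 \<noteq> p3 \<and> p2 \<noteq> p4 \<and> p3 \<noteq> p4)"
proof -
  define c d where "c = pco v" "d = qco v"
  define X where "X = {x. poly (Rp c d) x = 0}"
  have Rp0: "Rp c d \<noteq> 0" using r4 unfolding c_d_def Rp_def by auto
  have fX: "finite X" unfolding X_def using poly_roots_finite[OF Rp0] .
  define Y where "Y = (\<Union>x\<in>X. {y. poly [:c 0 + c 1 * x + c 3 * x^2, c 2 + c 4 * x, c 5:] y = 0})"
  have fY: "finite Y" unfolding Y_def
  proof (rule finite_UN_I[OF fX])
    fix x
    have "[:c 0 + c 1 * x + c 3 * x^2, c 2 + c 4 * x, c 5:] \<noteq> 0" using a5 unfolding c_d_def by auto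
    then show "finite {y. poly [:c 0 + c 1 * x + c 3 * x^2, c 2 + c 4 * x, c 5:] y = 0}" by (rule poly_roots_finite)
  qed
  have "Sing v \<subseteq> X \<times> Y"
  proof
    fix z assume "z \<in> Sing v"
    then have z: "qe c (fst z, snd z) = 0" "qe d (fst z, snd z) = 0" unfolding Sing_qe c_d_def by simp_all
    have x: "fst z \<in> X" unfolding X_def using sing_root[OF z] by simp
    have "poly [:c 0 + c 1 * fst z + c 3 * (fst z)^2, c 2 + c 4 * fst z, c 5:] (snd z) = 0"
      using z(1) unfolding qe_y by (simp add: algebra_simps power2_eq_square)
    then have "snd z \<in> Y" unfolding Y_def using x by blast
    then show "z \<in> X \<times> Y" using x by (simp add: mem_Times_iff)
  qed
  then have fin: "finite (Sing v)" using fX fY finite_subset by blast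
  have "card X = 4" unfolding X_def using Rp_card r4 ds unfolding c_d_def by blast
  then obtain x1 x2 x3 x4 where X: "X = {x1, x2, x3, x4}" and dx: "x1 \<noteq> x2" "x1 \<noteq> x3" "x1 \<noteq> x4" "x2 \<noteq> x3" "x2 \<noteq> x4" "x3 \<noteq> x4"
    using card4 by blast
  have lift: "x \<in> X \<Longrightarrow> \<exists>y. (x, y) \<in> Sing v" for x
    using root_sing[of c d x] a5 unfolding X_def Sing_qe c_d_def by auto
  obtain y1 y2 y3 y4 where "(x1, y1) \<in> Sing v" "(x2, y2) \<in> Sing v" "(x3, y3) \<in> Sing v" "(x4, y4) \<in> Sing v"
    using lift X by (metis insertI1 insert_commute)
  then show ?thesis using fin dx by blast
qed

definition det3 :: "complex \<Rightarrow> complex \<Rightarrow> complex \<Rightarrow> complex \<Rightarrow> complex \<Rightarrow> complex \<Rightarrow> complex \<Rightarrow> complex \<Rightarrow> complex \<Rightarrow> complex" where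
  "det3 a11 a12 a13 a21 a22 a23 a31 a32 a33 = a11 * (a22 * a33 - a23 * a32) - a12 * (a21 * a33 - a23 * a31) + a13 * (a21 * a32 - a22 * a31)"

lemma kernel3:
  fixes ax ay az aw bx bq bz bw cx cy cz cw kx ky kz kw :: complex
  assumes "kx * ax + ky * ay + kz * az + kw * aw = 0" "kx * bx + ky * bq + kz * bz + kw * bw = 0"
    "kx * cx + ky * cy + kz * cz + kw * cw = 0"
  shows "- det3 ax ay az bx bq bz cx cy cz * kx = kw * det3 ay az aw bq bz bw cy cz cw"
    "- det3 ax ay az bx bq bz cx cy cz * ky = kw * (- det3 ax az aw bx bz bw cx cz cw)"
    "- det3 ax ay az bx bq bz cx cy cz * kz = kw * det3 ax ay aw bx bq bw cx cy cw"
  using assms unfolding det3_def by algebra+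

lemma orth3:
  fixes a1 a2 a3 a4 b1 b2 b3 b4 c1 c2 c3 c4 :: complex
  shows "det3 a2 a3 a4 b2 b3 b4 c2 c3 c4 * a1 + (- det3 a1 a3 a4 b1 b3 b4 c1 c3 c4) * a2 + det3 a1 a2 a4 b1 b2 b4 c1 c2 c4 * a3 + (- det3 a1 a2 a3 b1 b2 b3 c1 c2 c3) * a4 = 0"
  unfolding det3_def by (simp add: algebra_simps)

definition Nv1 :: "(nat \<Rightarrow> complex) \<Rightarrow> (nat \<Rightarrow> complex) \<Rightarrow> complex" where
  "Nv1 c d = det3 (d 1) (c 2) (d 2) (2 * d 3) (c 4) (d 4) (d 4) (2 * c 5) (2 * d 5)"
definition Nv2 :: "(nat \<Rightarrow> complex) \<Rightarrow> (nat \<Rightarrow> complex) \<Rightarrow> complex" where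
  "Nv2 c d = - det3 (c 1) (c 2) (d 2) (2 * c 3) (c 4) (d 4) (c 4) (2 * c 5) (2 * d 5)"
definition Nv3 :: "(nat \<Rightarrow> complex) \<Rightarrow> (nat \<Rightarrow> complex) \<Rightarrow> complex" where
  "Nv3 c d = det3 (c 1) (d 1) (d 2) (2 * c 3) (2 * d 3) (d 4) (c 4) (d 4) (2 * d 5)"
definition Nv4 :: "(nat \<Rightarrow> complex) \<Rightarrow> (nat \<Rightarrow> complex) \<Rightarrow> complex" where
  "Nv4 c d = - det3 (c 1) (d 1) (c 2) (2 * c 3) (2 * d 3) (c 4) (c 4) (d 4) (2 * c 5)"

lemma N_orth: "Nv1 c d * qdx c z + Nv2 c d * qdx d z + Nv3 c d * qdy c z + Nv4 c d * qdy d z = 0"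
  unfolding Nv1_def Nv2_def Nv3_def Nv4_def det3_def qdx_def qdy_def by (simp add: algebra_simps)

lemma aff3:
  assumes D: "Dl p1 p2 p3 \<noteq> 0"
    and e: "L0 + L1 * fst p1 + L2 * snd p1 = 0" "L0 + L1 * fst p2 + L2 * snd p2 = 0" "L0 + L1 * fst p3 + L2 * snd p3 = 0"
  shows "L0 = 0 \<and> L1 = 0 \<and> L2 = (0::complex)"
proof -
  have "Dl p1 p2 p3 * L1 = 0" "Dl p1 p2 p3 * L2 = 0" using e unfolding Dl_def by algebra+
  then have "L1 = 0" "L2 = 0" using D by simp_all
  then show ?thesis using e by simp
qed

lemma lin_fields:
  assumes up: "\<forall>k<6. pco u k = m11 * pco v k + m12 * qco v k" and uq: "\<forall>k<6. qco u k = m21 * pco v k + m22 * qco v k"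
  shows "trD u z = trD v z + ((m11 - 1) * qdx (pco v) z + m12 * qdx (qco v) z + m21 * qdy (pco v) z + (m22 - 1) * qdy (qco v) z)"
    and "detD u z = (m11 * m22 - m12 * m21) * detD v z"
    and "m11 * m22 - m12 * m21 \<noteq> 0 \<Longrightarrow> Sing u = Sing v"
proof -
  have d: "qdx (pco u) z = m11 * qdx (pco v) z + m12 * qdx (qco v) z" "qdy (pco u) z = m11 * qdy (pco v) z + m12 * qdy (qco v) z"
       "qdx (qco u) z = m21 * qdx (pco v) z + m22 * qdx (qco v) z" "qdy (qco u) z = m21 * qdy (pco v) z + m22 * qdy (qco v) z"
    using coeff_cong(2,3)[OF up] coeff_cong(2,3)[OF uq] qdx_lin2 qdy_lin2 by metis+
  show "trD u z = trD v z + ((m11 - 1) * qdx (pco v) z + m12 * qdx (qco v) z + m21 * qdy (pco v) z + (m22 - 1) * qdy (qco v) z)"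
    unfolding trD_q d by (simp add: algebra_simps)
  show "detD u z = (m11 * m22 - m12 * m21) * detD v z"
    unfolding detD_J Jq_def d by (simp add: algebra_simps)
  assume M: "m11 * m22 - m12 * m21 \<noteq> 0"
  have e: "qe (pco u) w = m11 * qe (pco v) w + m12 * qe (qco v) w" "qe (qco u) w = m21 * qe (pco v) w + m22 * qe (qco v) w" for w
    using coeff_cong(1)[OF up] coeff_cong(1)[OF uq] qe_lin2 by metis+
  have "m11 * X + m12 * Y = 0 \<and> m21 * X + m22 * Y = 0 \<longleftrightarrow> X = 0 \<and> Y = 0" for X Y :: complex
  proof
    assume h: "m11 * X + m12 * Y = 0 \<and> m21 * X + m22 * Y = 0"
    have "(m11 * m22 - m12 * m21) * X = m22 * (m11 * X + m12 * Y) - m12 * (m21 * X + m22 * Y)"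
         "(m11 * m22 - m12 * m21) * Y = m11 * (m21 * X + m22 * Y) - m21 * (m11 * X + m12 * Y)" by (simp_all add: algebra_simps)
    then have "(m11 * m22 - m12 * m21) * X = 0" "(m11 * m22 - m12 * m21) * Y = 0" using h by simp_all
    then show "X = 0 \<and> Y = 0" using M by simp
  qed simp
  then show "Sing u = Sing v" unfolding set_eq_iff Sing_qe e by blast
qed

definition Dgen :: "(nat \<Rightarrow> complex) \<Rightarrow> (nat \<Rightarrow> complex) \<Rightarrow> complex" where
  "Dgen c d = c 5 * R4 c d * disc4 (R4 c d) (R3 c d) (R2 c d) (R1 c d) (R0 c d) * (c 3 * d 5 - c 5 * d 3)
     * Nv4 c d * (Nv1 c d + Nv4 c d) * (Nv1 c d * Nv4 c d - Nv2 c d * Nv3 c d)"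

lemma comb_inv:
  fixes al be ga de al' be' E F :: complex
  assumes Dd0: "al * de - be * ga \<noteq> 0"
  shows "al' * E + be' * F = ((al' * de - ga * be') / (al * de - be * ga)) * (al * E + be * F)
                              + ((al * be' - be * al') / (al * de - be * ga)) * (ga * E + de * F)"
proof -
  have n: "((al' * de - ga * be') * (al * E + be * F) + (al * be' - be * al') * (ga * E + de * F))
        = (al * de - be * ga) * (al' * E + be' * F)" by (simp add: algebra_simps)
  have "((al' * de - ga * be') / (al * de - be * ga)) * (al * E + be * F)
          + ((al * be' - be * al') / (al * de - be * ga)) * (ga * E + de * F)
        = ((al' * de - ga * be') * (al * E + be * F) + (al * be' - be * al') * (ga * E + de * F)) / (al * de - be * ga)"
    by (simp add: add_divide_distrib)
  also have "\<dots> = al' * E + be' * F" unfolding n using Dd0 by simp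
  finally show ?thesis by simp
qed

lemma unique_twin:
  assumes D: "Dgen (pco v) (qco v) \<noteq> 0"
  shows "\<exists>!u. twin v u"
proof -
  define c d where "c = pco v" "d = qco v"
  define N1 N2 N3 N4 where "N1 = Nv1 c d" "N2 = Nv2 c d" "N3 = Nv3 c d" "N4 = Nv4 c d"
  have a5: "pco v 5 \<noteq> 0" and r4: "R4 (pco v) (qco v) \<noteq> 0"
    and ds: "disc4 (R4 (pco v) (qco v)) (R3 (pco v) (qco v)) (R2 (pco v) (qco v)) (R1 (pco v) (qco v)) (R0 (pco v) (qco v)) \<noteq> 0"
    and g4: "c 3 * d 5 - c 5 * d 3 \<noteq> 0" and n4: "N4 \<noteq> 0" and tN: "N1 + N4 \<noteq> 0" and dN: "N1 * N4 - N2 * N3 \<noteq> 0"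
    using D unfolding Dgen_def c_d_def N1_N2_N3_N4_def by auto
  obtain p1 p2 p3 p4 where fin: "finite (Sing v)" and pin: "p1 \<in> Sing v" "p2 \<in> Sing v" "p3 \<in> Sing v" "p4 \<in> Sing v"
    and dp: "p1 \<noteq> p2" "p1 \<noteq> p3" "p1 \<noteq> p4" "p2 \<noteq> p3" "p2 \<noteq> p4" "p3 \<noteq> p4"
    using four_points[OF a5 r4 ds] by blast
  have g: "gp p1 p2 p3 p4" by (rule gp_of_sing[OF fin pin dp])
  have orth: "N1 * qdx c z + N2 * qdx d z + N3 * qdy c z + N4 * qdy d z = 0" for z
    unfolding N1_N2_N3_N4_def by (rule N_orth)
  define s where "s = - (N1 + N4) / (N1 * N4 - N2 * N3)"
  have sN: "s * (N1 * N4 - N2 * N3) = - (N1 + N4)" unfolding s_def using dN by simp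
  have s0: "s \<noteq> 0" using sN tN by auto
  have detM0: "(1 + s * N1) * (1 + s * N4) - (s * N2) * (s * N3) = 1"
  proof -
    have "(1 + s * N1) * (1 + s * N4) - (s * N2) * (s * N3) = 1 + s * (N1 + N4) + s * (s * (N1 * N4 - N2 * N3))"
      by (simp add: algebra_simps)
    then show ?thesis unfolding sN by (simp add: algebra_simps)
  qed
  obtain u0 where u0: "\<forall>k<6. pco u0 k = (1 + s * N1) * c k + (s * N2) * d k \<and> qco u0 k = (s * N3) * c k + (1 + s * N4) * d k"
    using mk_qvf[of "\<lambda>k. (1 + s * N1) * c k + (s * N2) * d k" "\<lambda>k. (s * N3) * c k + (1 + s * N4) * d k"] by blast
  have u0p: "\<forall>k<6. pco u0 k = (1 + s * N1) * pco v k + (s * N2) * qco v k"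
   and u0q: "\<forall>k<6. qco u0 k = (s * N3) * pco v k + (1 + s * N4) * qco v k" using u0 unfolding c_d_def by auto
  have tw0: "twin v u0"
  proof -
    have S0: "Sing u0 = Sing v" using lin_fields(3)[OF u0p u0q] detM0 by simp
    have tr0: "trD u0 z = trD v z" for z
    proof -
      have "trD u0 z = trD v z + s * (N1 * qdx c z + N2 * qdx d z + N3 * qdy c z + N4 * qdy d z)"
        unfolding lin_fields(1)[OF u0p u0q] c_d_def by (simp add: algebra_simps)
      then show ?thesis using orth by simp
    qed
    have dt0: "detD u0 z = detD v z" for z using lin_fields(2)[OF u0p u0q] detM0 by simp
    have ne: "u0 \<noteq> v"
    proof
      assume "u0 = v"
      then have "qco u0 3 = d 3" "qco u0 5 = d 5" unfolding c_d_def by simp_all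
      then have e: "s * (N3 * c 3 + N4 * d 3) = 0" "s * (N3 * c 5 + N4 * d 5) = 0"
        using u0 by (auto simp: algebra_simps)
      then have e': "N3 * c 3 + N4 * d 3 = 0" "N3 * c 5 + N4 * d 5 = 0" using s0 by simp_all
      have "N4 * (c 3 * d 5 - c 5 * d 3) = c 3 * (N3 * c 5 + N4 * d 5) - c 5 * (N3 * c 3 + N4 * d 3)"
        by (simp add: algebra_simps)
      then have "N4 * (c 3 * d 5 - c 5 * d 3) = 0" using e' by simp
      then show False using n4 g4 by simp
    qed
    show ?thesis unfolding twin_def using isol fin S0 tr0 dt0 ne by auto
  qed
  have uniq: "u = u0" if tw: "twin v u" for u
  proof -
    have SU: "Sing u = Sing v" and ne: "v \<noteq> u" and tdu: "\<forall>p\<in>Sing v. trD v p = trD u p \<and> detD v p = detD u p"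
      using tw unfolding twin_def by auto
    obtain al be where ab: "\<forall>k<6. c k = al * C1 p1 p2 p3 p4 k + be * C2 p1 p2 p3 p4 k"
      using pencil[OF g] pin unfolding Sing_qe c_d_def by meson
    obtain ga de where gd: "\<forall>k<6. d k = ga * C1 p1 p2 p3 p4 k + de * C2 p1 p2 p3 p4 k"
      using pencil[OF g] pin unfolding Sing_qe c_d_def by meson
    have pinu: "p1 \<in> Sing u" "p2 \<in> Sing u" "p3 \<in> Sing u" "p4 \<in> Sing u" using pin SU by auto
    obtain al' be' where ab': "\<forall>k<6. pco u k = al' * C1 p1 p2 p3 p4 k + be' * C2 p1 p2 p3 p4 k"
      using pencil[OF g] pinu unfolding Sing_qe by meson
    obtain ga' de' where gd': "\<forall>k<6. qco u k = ga' * C1 p1 p2 p3 p4 k + de' * C2 p1 p2 p3 p4 k"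
      using pencil[OF g] pinu unfolding Sing_qe by meson
    define Dd where "Dd = al * de - be * ga"
    have "c 3 * d 5 - c 5 * d 3 = Dd * (C1 p1 p2 p3 p4 3 * C2 p1 p2 p3 p4 5 - C1 p1 p2 p3 p4 5 * C2 p1 p2 p3 p4 3)"
      using ab gd unfolding all6 Dd_def by (simp add: algebra_simps)
    then have Dd0: "Dd \<noteq> 0" using g4 by auto
    define m11 m12 m21 m22 where "m11 = (al' * de - ga * be') / Dd" "m12 = (al * be' - be * al') / Dd"
      "m21 = (ga' * de - ga * de') / Dd" "m22 = (al * de' - be * ga') / Dd"
    have Dd0': "al * de - be * ga \<noteq> 0" using Dd0 Dd_def by simp
    have up: "\<forall>k<6. pco u k = m11 * pco v k + m12 * qco v k"
    proof (intro allI impI)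
      fix k :: nat assume "k < 6"
      then show "pco u k = m11 * pco v k + m12 * qco v k"
        using ab gd ab' comb_inv[OF Dd0', of al' "C1 p1 p2 p3 p4 k" be' "C2 p1 p2 p3 p4 k"]
        unfolding m11_m12_m21_m22_def c_d_def Dd_def by simp
    qed
    have uq: "\<forall>k<6. qco u k = m21 * pco v k + m22 * qco v k"
    proof (intro allI impI)
      fix k :: nat assume "k < 6"
      then show "qco u k = m21 * pco v k + m22 * qco v k"
        using ab gd gd' comb_inv[OF Dd0', of ga' "C1 p1 p2 p3 p4 k" de' "C2 p1 p2 p3 p4 k"]
        unfolding m11_m12_m21_m22_def c_d_def Dd_def by simp
    qed
    define k1 k2 k3 k4 where "k1 = m11 - 1" "k2 = m12" "k3 = m21" "k4 = m22 - 1"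
    have K0: "k1 * qdx c p + k2 * qdx d p + k3 * qdy c p + k4 * qdy d p = 0" if "p \<in> Sing v" for p
      using lin_fields(1)[OF up uq, of p] tdu that unfolding k1_k2_k3_k4_def c_d_def by auto
    define L0 L1 L2 where "L0 = k1 * c 1 + k2 * d 1 + k3 * c 2 + k4 * d 2"
      "L1 = k1 * (2 * c 3) + k2 * (2 * d 3) + k3 * c 4 + k4 * d 4"
      "L2 = k1 * c 4 + k2 * d 4 + k3 * (2 * c 5) + k4 * (2 * d 5)"
    have KL: "k1 * qdx c p + k2 * qdx d p + k3 * qdy c p + k4 * qdy d p = L0 + L1 * fst p + L2 * snd p" for p
      unfolding L0_L1_L2_def qdx_def qdy_def by (simp add: algebra_simps)
    have "L0 = 0 \<and> L1 = 0 \<and> L2 = 0"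
      using aff3[of p1 p2 p3 L0 L1 L2] g K0 pin KL unfolding gp_def by metis
    then have L: "L0 = 0" "L1 = 0" "L2 = 0" by auto
    have kk: "- det3 (c 1) (d 1) (c 2) (2 * c 3) (2 * d 3) (c 4) (c 4) (d 4) (2 * c 5) * k1 = k4 * det3 (d 1) (c 2) (d 2) (2 * d 3) (c 4) (d 4) (d 4) (2 * c 5) (2 * d 5)"
      "- det3 (c 1) (d 1) (c 2) (2 * c 3) (2 * d 3) (c 4) (c 4) (d 4) (2 * c 5) * k2 = k4 * (- det3 (c 1) (c 2) (d 2) (2 * c 3) (c 4) (d 4) (c 4) (2 * c 5) (2 * d 5))"
      "- det3 (c 1) (d 1) (c 2) (2 * c 3) (2 * d 3) (c 4) (c 4) (d 4) (2 * c 5) * k3 = k4 * det3 (c 1) (d 1) (d 2) (2 * c 3) (2 * d 3) (d 4) (c 4) (d 4) (2 * d 5)"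
      by (rule kernel3[where ax = "c 1" and ay = "d 1" and az = "c 2" and aw = "d 2"
            and bx = "2 * c 3" and bq = "2 * d 3" and bz = "c 4" and bw = "d 4"
            and cx = "c 4" and cy = "d 4" and cz = "2 * c 5" and cw = "2 * d 5"
            and kx = k1 and ky = k2 and kz = k3 and kw = k4];
          use L in \<open>simp add: L0_L1_L2_def\<close>)+
    define t where "t = k4 / N4"
    have kk': "N4 * k1 = k4 * N1" "N4 * k2 = k4 * N2" "N4 * k3 = k4 * N3"
      using kk unfolding N1_N2_N3_N4_def Nv1_def Nv2_def Nv3_def Nv4_def by simp_all
    have kt: "k1 = t * N1" "k2 = t * N2" "k3 = t * N3" "k4 = t * N4"
    proof -
      have "t * N1 = (N4 * k1) / N4" "t * N2 = (N4 * k2) / N4" "t * N3 = (N4 * k3) / N4"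
        unfolding t_def kk' by simp_all
      then show "k1 = t * N1" "k2 = t * N2" "k3 = t * N3" using n4 by simp_all
      show "k4 = t * N4" unfolding t_def using n4 by simp
    qed
    have dv1: "detD v p1 \<noteq> 0"
    proof -
      have "detD v p1 = Dd * Jq (C1 p1 p2 p3 p4) (C2 p1 p2 p3 p4) p1"
        unfolding detD_J Dd_def using J_lin[OF ab gd] unfolding c_d_def by simp
      then show ?thesis using Dd0 g J_C(1)[of p1 p2 p3 p4] unfolding gp_def by simp
    qed
    have "detD u p1 = detD v p1" using tdu pin by auto
    then have "(m11 * m22 - m12 * m21) = 1" using lin_fields(2)[OF up uq, of p1] dv1 by simp
    then have "(1 + t * N1) * (1 + t * N4) - (t * N2) * (t * N3) = 1"
      using kt unfolding k1_k2_k3_k4_def by (simp add: algebra_simps)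
    then have "t * ((N1 + N4) + t * (N1 * N4 - N2 * N3)) = 0" by (simp add: algebra_simps power2_eq_square)
    moreover have "t \<noteq> 0"
    proof
      assume "t = 0"
      then have "m11 = 1" "m12 = 0" "m21 = 0" "m22 = 1" using kt unfolding k1_k2_k3_k4_def by auto
      then have "u = v" using up uq qvf_eq by simp
      then show False using ne by simp
    qed
    ultimately have "(N1 + N4) + t * (N1 * N4 - N2 * N3) = 0" by simp
    then have "t * (N1 * N4 - N2 * N3) = - (N1 + N4)" by (simp add: algebra_simps add_eq_0_iff)
    then have "t = s" unfolding s_def using dN by (simp add: field_simps)
    then have "m11 = 1 + s * N1" "m12 = s * N2" "m21 = s * N3" "m22 = 1 + s * N4"
      using kt unfolding k1_k2_k3_k4_def by (simp_all add: algebra_simps)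
    then show "u = u0" using up uq u0 qvf_eq unfolding c_d_def by simp
  qed
  show ?thesis using tw0 uniq by blast
qed

lemma pf_minus: "f \<in> poly_fun \<Longrightarrow> g \<in> poly_fun \<Longrightarrow> (\<lambda>v. f v - g v) \<in> poly_fun"
proof -
  assume f: "f \<in> poly_fun" and g: "g \<in> poly_fun"
  have "(\<lambda>v. f v + (\<lambda>_. -1) v * g v) \<in> poly_fun" by (intro pf_add pf_mult f g pf_const)
  then show ?thesis by simp
qed

lemma pf_uminus: "f \<in> poly_fun \<Longrightarrow> (\<lambda>v. - f v) \<in> poly_fun"
proof -
  assume f: "f \<in> poly_fun"
  have "(\<lambda>v. (\<lambda>_. -1) v * f v) \<in> poly_fun" by (intro pf_mult f pf_const)
  then show ?thesis by simp
qed

lemma pf_pow: "f \<in> poly_fun \<Longrightarrow> (\<lambda>v. f v ^ n) \<in> poly_fun"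
proof (induction n)
  case 0
  then show ?case using pf_const[of 1] by simp
next
  case (Suc n)
  then have "(\<lambda>v. f v * f v ^ n) \<in> poly_fun" by (intro pf_mult) auto
  then show ?case by simp
qed

lemma pf_pco: "(\<lambda>v. pco v k) \<in> poly_fun"
  unfolding pco_def by (cases "k = 0"; cases "k = 1"; cases "k = 2"; cases "k = 3"; cases "k = 4"; simp add: pf_coord)
lemma pf_qco: "(\<lambda>v. qco v k) \<in> poly_fun"
  unfolding qco_def by (cases "k = 0"; cases "k = 1"; cases "k = 2"; cases "k = 3"; cases "k = 4"; simp add: pf_coord)

lemmas pf_intros = pf_add pf_mult pf_minus pf_uminus pf_pow pf_pco pf_qco pf_const

lemma pf_R:
  "(\<lambda>v. R0 (pco v) (qco v)) \<in> poly_fun" "(\<lambda>v. R1 (pco v) (qco v)) \<in> poly_fun"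
  "(\<lambda>v. R2 (pco v) (qco v)) \<in> poly_fun" "(\<lambda>v. R3 (pco v) (qco v)) \<in> poly_fun"
  "(\<lambda>v. R4 (pco v) (qco v)) \<in> poly_fun"
  unfolding R0_def R1_def R2_def R3_def R4_def rA0_def rA1_def rA2_def rB0_def rB1_def rC0_def rC1_def rC2_def rC3_def
  by (intro pf_intros)+

lemma pf_disc4:
  assumes "f1 \<in> poly_fun" "f2 \<in> poly_fun" "f3 \<in> poly_fun" "f4 \<in> poly_fun" "f5 \<in> poly_fun"
  shows "(\<lambda>v. disc4 (f1 v) (f2 v) (f3 v) (f4 v) (f5 v)) \<in> poly_fun"
  unfolding disc4_def by (intro pf_intros assms)+

lemma pf_det3:
  assumes "f1 \<in> poly_fun" "f2 \<in> poly_fun" "f3 \<in> poly_fun" "f4 \<in> poly_fun" "f5 \<in> poly_fun"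
    "f6 \<in> poly_fun" "f7 \<in> poly_fun" "f8 \<in> poly_fun" "f9 \<in> poly_fun"
  shows "(\<lambda>v. det3 (f1 v) (f2 v) (f3 v) (f4 v) (f5 v) (f6 v) (f7 v) (f8 v) (f9 v)) \<in> poly_fun"
  unfolding det3_def by (intro pf_intros assms)+

lemma pf_N:
  "(\<lambda>v. Nv1 (pco v) (qco v)) \<in> poly_fun" "(\<lambda>v. Nv2 (pco v) (qco v)) \<in> poly_fun"
  "(\<lambda>v. Nv3 (pco v) (qco v)) \<in> poly_fun" "(\<lambda>v. Nv4 (pco v) (qco v)) \<in> poly_fun"
  unfolding Nv1_def Nv2_def Nv3_def Nv4_def
  by (intro pf_intros pf_det3)+

lemma pf_Dgen: "(\<lambda>v. Dgen (pco v) (qco v)) \<in> poly_fun"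
  unfolding Dgen_def
  by (intro pf_intros pf_disc4 pf_R pf_N)+

lemma nonempty_U: "\<exists>v. Dgen (pco v) (qco v) \<noteq> 0"
proof -
  obtain v0 where v0: "\<forall>k<6. pco v0 k = (if k = 1 then -1 else if k = 5 then 2 else 0) \<and>
                                qco v0 k = (if k = 2 then 1 else if k = 3 then 2 else 0)"
    using mk_qvf[of "\<lambda>k. if k = 1 then -1 else if k = 5 then 2 else 0" "\<lambda>k. if k = 2 then 1 else if k = 3 then 2 else 0"] by blast
  have e: "pco v0 0 = 0" "pco v0 1 = -1" "pco v0 2 = 0" "pco v0 3 = 0" "pco v0 4 = 0" "pco v0 5 = 2"
          "qco v0 0 = 0" "qco v0 1 = 0" "qco v0 2 = 1" "qco v0 3 = 2" "qco v0 4 = 0" "qco v0 5 = 0"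
    using v0 unfolding all6 by simp_all
  have "Dgen (pco v0) (qco v0) \<noteq> 0"
    unfolding Dgen_def R0_def R1_def R2_def R3_def R4_def rA0_def rA1_def rA2_def rB0_def rB1_def rC0_def rC1_def rC2_def rC3_def
      Nv1_def Nv2_def Nv3_def Nv4_def det3_def disc4_def e by simp
  then show ?thesis by blast
qed

theorem theorem1p3:
  shows "(\<forall>v w :: qvf.
            finite (Sing v) \<and> card (Sing v) = 4 \<and> (\<forall>p\<in>Sing v. detD v p \<noteq> 0) \<and>
            finite (Sing w) \<and> card (Sing w) = 4 \<and> (\<forall>p\<in>Sing w. detD w p \<noteq> 0) \<and>
            spectra v = spectra w \<longrightarrow>
            (\<exists>a b c d e f. a * d - b * c \<noteq> 0 \<and>
               (\<exists>u :: qvf. vf u = pushfwd a b c d e f w \<and> (u = v \<or> twin v u))))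
         \<and> (\<exists>U :: qvf set. zariski_open U \<and> U \<noteq> {} \<and> (\<forall>v\<in>U. \<exists>!u. twin v u))"
proof
  show "\<forall>v w :: qvf.
            finite (Sing v) \<and> card (Sing v) = 4 \<and> (\<forall>p\<in>Sing v. detD v p \<noteq> 0) \<and>
            finite (Sing w) \<and> card (Sing w) = 4 \<and> (\<forall>p\<in>Sing w. detD w p \<noteq> 0) \<and>
            spectra v = spectra w \<longrightarrow>
            (\<exists>a b c d e f. a * d - b * c \<noteq> 0 \<and>
               (\<exists>u :: qvf. vf u = pushfwd a b c d e f w \<and> (u = v \<or> twin v u)))"
    using part1 by blast
  define U where "U = {v :: qvf. Dgen (pco v) (qco v) \<noteq> 0}"
  have "zariski_open U"
    unfolding zariski_open_def U_def
    by (rule exI[of _ "{\<lambda>v. Dgen (pco v) (qco v)}"]) (auto simp: pf_Dgen)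
  moreover have "U \<noteq> {}" using nonempty_U unfolding U_def by blast
  moreover have "\<forall>v\<in>U. \<exists>!u. twin v u" unfolding U_def using unique_twin by blast
  ultimately show "\<exists>U :: qvf set. zariski_open U \<and> U \<noteq> {} \<and> (\<forall>v\<in>U. \<exists>!u. twin v u)" by blast
qed

end
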